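(* Let $\mu\in\mathbb{N}$ and let $A\subset\mathbb{R}^{\alpha}$ be open. Let $(x,y,a)\mapsto U_a(x,y)$ be analytic on $[-1,1]^2\times A$, with $U_a(0,0)>0$ for every $a\in A$ and such that, for each $a\in A$, the Taylor series of $U_a$ at $(0,0)$ converges absolutely on $[-1,1]^2$. Let $(x,a)\mapsto V_a(x)$ be analytic on $[-1,1]\times A$ with $V_a(x)>0$ for all $(x,a)\in[-1,1]\times A$. For $\varepsilon\approx 0$ consider the family of vector fields \[ X=\frac{1}{xU_a(x,y)}\Big(x(x^\mu-\varepsilon)\partial_x-V_a(x)\,y\,\partial_y\Big). \] Let $\vartheta_\varepsilon$ denote the largest real root of $x(x^\mu-\varepsilon)=0$, i.e. $\vartheta_\varepsilon=0$ if $\varepsilon\le 0$ and $\vartheta_\varepsilon=\varepsilon^{1/\mu}$ if $\varepsilon\ge 0$. For $s>0$ small, let $\mathcal{T}(s;\varepsilon,a)$ be the time that the trajectory of $X$ starting at the point $(s+\vartheta_\varepsilon,1)\in\{y=1\}$ takes to reach the transverse section $\{x=1\}$ (the Dulac time between $\{y=1\}$ and $\{x=1\}$). Then \[ \lim_{(s,\varepsilon)\to(0^+,0)}\partial_s\mathcal{T}(s;\varepsilon,a)=-\infty \] uniformly with respect to $a$ on every compact subset of $A$.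
   Context: The point $(\vartheta_\varepsilon,0)$ is a hyperbolic saddle of $X$ for $\varepsilon\neq0$ and the family unfolds a saddle-node at $\varepsilon=0$. Equivalently, if $y=y(x;s)$ denotes the trajectory of $x(x^\mu-\varepsilon)\partial_x-V_a(x)y\partial_y$ with $y(s+\vartheta_\varepsilon;s)=1$, then $\mathcal{T}(s;\varepsilon,a)=\int_{s+\vartheta_\varepsilon}^1 \frac{U_a(x,y(x;s))}{x^\mu-\varepsilon}\,dx$ for $s\in(0,s_0]$, $|\varepsilon|\le\varepsilon_0$ with $s_0,\varepsilon_0>0$ small. *)

theory Defs
  imports "HOL-Analysis.Analysis"
begin

definition multi_indices :: "('e::euclidean_space \<Rightarrow> nat) set" where
  "multi_indices = {k. \<forall>b. b \<notin> Basis \<longrightarrow> k b = 0}"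

definition monomial :: "('e::euclidean_space \<Rightarrow> nat) \<Rightarrow> 'e \<Rightarrow> real" where
  "monomial k v = (\<Prod>b\<in>Basis. (v \<bullet> b) ^ k b)"

definition real_analytic_on :: "('e::euclidean_space \<Rightarrow> real) \<Rightarrow> 'e set \<Rightarrow> bool" where
  "real_analytic_on f S \<longleftrightarrow>
     (\<forall>p\<in>S. \<exists>r>0. \<exists>c::('e \<Rightarrow> nat) \<Rightarrow> real. \<forall>v\<in>ball p r.
        ((\<lambda>k. c k * monomial k (v - p)) has_sum f v) multi_indices)"

text \<open>Largest real root of x (x^mu - eps) = 0.\<close>
definition theta :: "nat \<Rightarrow> real \<Rightarrow> real" where
  "theta \<mu> \<epsilon> = (if \<epsilon> \<le> 0 then 0 else root \<mu> \<epsilon>)"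

text \<open>The orbit y = y(x;s) of  x(x^mu - eps) d/dx - V(x) y d/dy  through (s + theta, 1),
  written as a graph over x on [s + theta, 1] (orbit equation dy/dx = -V y / (x(x^mu-eps))).\<close>
definition orbit_y :: "nat \<Rightarrow> (real \<Rightarrow> real) \<Rightarrow> real \<Rightarrow> real \<Rightarrow> real \<Rightarrow> real" where
  "orbit_y \<mu> V \<epsilon> s x = (THE v. \<exists>y. y (s + theta \<mu> \<epsilon>) = 1 \<and>
      (\<forall>t\<in>{s + theta \<mu> \<epsilon>..1}.
         (y has_real_derivative (- V t * y t / (t * (t ^ \<mu> - \<epsilon>)))) (at t within {s + theta \<mu> \<epsilon>..1}))
      \<and> y x = v)"

definition dulac_time :: "nat \<Rightarrow> (real \<Rightarrow> real \<Rightarrow> real) \<Rightarrow> (real \<Rightarrow> real) \<Rightarrow> real \<Rightarrow> real \<Rightarrow> real" where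
  "dulac_time \<mu> U V \<epsilon> s =
     integral {s + theta \<mu> \<epsilon>..1} (\<lambda>x. U x (orbit_y \<mu> V \<epsilon> s x) / (x ^ \<mu> - \<epsilon>))"

end

theory Submission
  imports Defs
begin


lemma tendsto_infsum_dominated:
  fixes f :: "'x \<Rightarrow> 'k \<Rightarrow> real" and g :: "'k \<Rightarrow> real"
  assumes g: "g summable_on I"
    and bnd: "eventually (\<lambda>x. \<forall>k\<in>I. \<bar>f x k\<bar> \<le> g k) F"
    and lim: "\<And>k. k \<in> I \<Longrightarrow> ((\<lambda>x. f x k) \<longlongrightarrow> l k) F"
  shows "((\<lambda>x. infsum (f x) I) \<longlongrightarrow> infsum l I) F"
proof (cases "F = bot")
  case True then show ?thesis by simp
next
  case Fnb: False
  have lb: "\<bar>l k\<bar> \<le> g k" if "k \<in> I" for k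
  proof -
    have "((\<lambda>x. \<bar>f x k\<bar>) \<longlongrightarrow> \<bar>l k\<bar>) F" using lim[OF that] by (intro tendsto_intros)
    moreover have "eventually (\<lambda>x. \<bar>f x k\<bar> \<le> g k) F" using bnd that by (auto elim: eventually_mono)
    ultimately show ?thesis using Fnb by (intro tendsto_upperbound) auto
  qed
  have g0: "0 \<le> g k" if "k \<in> I" for k using lb[OF that] by linarith
  have lsum: "l summable_on I"
    using Infinite_Sum.abs_summable_on_comparison_test'[OF g, of l] lb by (auto intro: abs_summable_summable)
  show ?thesis
  proof (rule tendstoI)
    fix e :: real assume e: "e > 0"
    have "(sum g \<longlongrightarrow> infsum g I) (finite_subsets_at_top I)"
      using g by (simp add: has_sum_def[symmetric] has_sum_infsum)
    then have "eventually (\<lambda>X. dist (sum g X) (infsum g I) < e/3) (finite_subsets_at_top I)"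
      using e by (intro tendstoD) auto
    then obtain F0 where F0: "finite F0" "F0 \<subseteq> I" "dist (sum g F0) (infsum g I) < e/3"
      unfolding eventually_finite_subsets_at_top by blast
    have gs: "g summable_on (I - F0)" using g by (rule summable_on_subset_banach) auto
    have tail: "infsum g (I - F0) < e/3"
    proof -
      have a: "\<bar>sum g F0 - infsum g I\<bar> < e/3" using F0(3) by (simp add: dist_real_def)
      have b: "infsum g (I - F0) = infsum g I - sum g F0"
        using infsum_Diff[OF g summable_on_finite[OF F0(1)] F0(2)] infsum_finite[OF F0(1)] by simp
      show ?thesis unfolding b using a by linarith
    qed
    have "((\<lambda>x. \<Sum>k\<in>F0. f x k) \<longlongrightarrow> (\<Sum>k\<in>F0. l k)) F"
      using lim F0(2) by (intro tendsto_sum) auto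
    then have ev1: "eventually (\<lambda>x. dist (\<Sum>k\<in>F0. f x k) (\<Sum>k\<in>F0. l k) < e/3) F"
      using e by (intro tendstoD) auto
    show "eventually (\<lambda>x. dist (infsum (f x) I) (infsum l I) < e) F"
      using ev1 bnd
    proof eventually_elim
      case (elim x)
      have fs: "f x summable_on I"
        using Infinite_Sum.abs_summable_on_comparison_test'[OF g, of "f x"] elim(2) by (auto intro: abs_summable_summable)
      have fs2: "f x summable_on (I - F0)" using fs by (rule summable_on_subset_banach) auto
      have ls2: "l summable_on (I - F0)" using lsum by (rule summable_on_subset_banach) auto
      have e1: "infsum (f x) I = (\<Sum>k\<in>F0. f x k) + infsum (f x) (I - F0)"
        using infsum_Diff[OF fs summable_on_finite[OF F0(1)] F0(2)] by (simp add: infsum_finite[OF F0(1)])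
      have e2: "infsum l I = (\<Sum>k\<in>F0. l k) + infsum l (I - F0)"
        using infsum_Diff[OF lsum summable_on_finite[OF F0(1)] F0(2)] by (simp add: infsum_finite[OF F0(1)])
      have b1: "\<bar>infsum (f x) (I - F0)\<bar> \<le> infsum g (I - F0)"
      proof -
        have "\<bar>infsum (f x) (I - F0)\<bar> \<le> infsum (\<lambda>k. \<bar>f x k\<bar>) (I - F0)"
          using norm_infsum_bound[of "f x" "I - F0"] Infinite_Sum.abs_summable_on_comparison_test'[OF gs, of "f x"] elim(2) by auto
        also have "\<dots> \<le> infsum g (I - F0)"
          using Infinite_Sum.abs_summable_on_comparison_test'[OF gs, of "f x"] elim(2) gs by (intro infsum_mono) auto
        finally show ?thesis .
      qed
      have b2: "\<bar>infsum l (I - F0)\<bar> \<le> infsum g (I - F0)"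
      proof -
        have "\<bar>infsum l (I - F0)\<bar> \<le> infsum (\<lambda>k. \<bar>l k\<bar>) (I - F0)"
          using norm_infsum_bound[of "l" "I - F0"] Infinite_Sum.abs_summable_on_comparison_test'[OF gs, of "l"] lb by auto
        also have "\<dots> \<le> infsum g (I - F0)"
          using Infinite_Sum.abs_summable_on_comparison_test'[OF gs, of "l"] lb gs by (intro infsum_mono) auto
        finally show ?thesis .
      qed
      show ?case using elim(1) b1 b2 tail unfolding e1 e2 dist_real_def by linarith
    qed
  qed
qed



definition Pm :: "'e::euclidean_space \<Rightarrow> ('e \<Rightarrow> nat) \<Rightarrow> 'e \<Rightarrow> real" where
  "Pm b k z = (\<Prod>b'\<in>Basis - {b}. (z \<bullet> b') ^ k b')"

lemma monomial_split:
  fixes b :: "'e::euclidean_space"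
  assumes b: "b \<in> Basis"
  shows "monomial k (z + t *\<^sub>R b) = (z \<bullet> b + t) ^ k b * Pm b k z"
proof -
  have "monomial k (z + t *\<^sub>R b) = ((z + t *\<^sub>R b) \<bullet> b) ^ k b * (\<Prod>b'\<in>Basis - {b}. ((z + t *\<^sub>R b) \<bullet> b') ^ k b')"
    unfolding monomial_def using b by (simp add: prod.remove)
  also have "(\<Prod>b'\<in>Basis - {b}. ((z + t *\<^sub>R b) \<bullet> b') ^ k b') = Pm b k z"
    unfolding Pm_def using b by (intro prod.cong) (auto simp: inner_add_left inner_Basis)
  finally show ?thesis using b by (simp add: inner_add_left)
qed

lemma pow_diff_bound:
  fixes x y R :: real
  assumes "\<bar>x\<bar> \<le> R" "\<bar>y\<bar> \<le> R"
  shows "\<bar>x ^ m - y ^ m\<bar> \<le> real m * R ^ (m - 1) * \<bar>x - y\<bar>"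
proof (cases m)
  case 0 then show ?thesis by simp
next
  case (Suc n)
  have R: "0 \<le> R" using assms by linarith
  have "\<bar>\<Sum>p<Suc n. x ^ p * y ^ (n - p)\<bar> \<le> (\<Sum>p<Suc n. R ^ n)"
  proof -
    have "\<bar>\<Sum>p<Suc n. x ^ p * y ^ (n - p)\<bar> \<le> (\<Sum>p<Suc n. \<bar>x ^ p * y ^ (n - p)\<bar>)" by (rule sum_abs)
    also have "\<dots> \<le> (\<Sum>p<Suc n. R ^ n)"
    proof (rule sum_mono)
      fix p assume p: "p \<in> {..<Suc n}"
      have "\<bar>x ^ p * y ^ (n - p)\<bar> = \<bar>x\<bar> ^ p * \<bar>y\<bar> ^ (n - p)" by (simp add: abs_mult power_abs)
      also have "\<dots> \<le> R ^ p * R ^ (n - p)"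
        using assms by (intro mult_mono power_mono) auto
      also have "\<dots> = R ^ n" using p by (simp add: power_add[symmetric])
      finally show "\<bar>x ^ p * y ^ (n - p)\<bar> \<le> R ^ n" .
    qed
    finally show ?thesis .
  qed
  then have "\<bar>x - y\<bar> * \<bar>\<Sum>p<Suc n. x ^ p * y ^ (n - p)\<bar> \<le> \<bar>x - y\<bar> * (\<Sum>p<Suc n. R ^ n)"
    by (intro mult_left_mono) auto
  moreover have "\<bar>x ^ Suc n - y ^ Suc n\<bar> = \<bar>x - y\<bar> * \<bar>\<Sum>p<Suc n. x ^ p * y ^ (n - p)\<bar>"
    by (subst diff_power_eq_sum) (simp add: abs_mult)
  moreover have "(\<Sum>p<Suc n. R ^ n) = real (Suc n) * R ^ n" by simp
  ultimately show ?thesis using Suc by (simp add: algebra_simps)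
qed

lemma n_34_bound: "real n * (3/4::real) ^ (n - 1) \<le> 3"
proof (cases n)
  case 0 then show ?thesis by simp
next
  case (Suc m)
  have "1 + real m * (1/3) \<le> (1 + 1/3::real) ^ m" by (rule Bernoulli_inequality) auto
  then have "(real m + 3) / 3 \<le> (4/3::real) ^ m" by (simp add: field_simps)
  then have "real m + 3 \<le> 3 * (4/3::real) ^ m" by (simp add: divide_le_eq mult.commute)
  then have "(real m + 1) \<le> 3 * (4/3::real) ^ m" by linarith
  then have "(real m + 1) * (3/4::real) ^ m \<le> 3 * ((4/3) ^ m * (3/4) ^ m)"
    by (metis (no_types, lifting) mult.assoc mult_right_mono zero_le_divide_iff zero_le_numeral zero_le_power)
  also have "(4/3::real) ^ m * (3/4) ^ m = 1" by (simp add: power_mult_distrib[symmetric])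
  finally show ?thesis using Suc by (simp add: add.commute)
qed



lemma has_sum_diff':
  fixes f g :: "'a \<Rightarrow> real"
  shows "(f has_sum a) A \<Longrightarrow> (g has_sum b) A \<Longrightarrow> ((\<lambda>x. f x - g x) has_sum (a - b)) A"
proof -
  assume a: "(f has_sum a) A" and b: "(g has_sum b) A"
  have e: "sum (\<lambda>x. f x - g x) = (\<lambda>X. sum f X - sum g X)" by (rule ext) (simp add: sum_subtractf)
  show ?thesis using a b unfolding has_sum_def e by (rule tendsto_diff)
qed

lemma inner_sumBasis: "b' \<in> Basis \<Longrightarrow> (\<Sum>b\<in>Basis. b) \<bullet> (b'::'e::euclidean_space) = 1"
  by (simp add: inner_sum_left inner_Basis sum.delta)

lemma analytic_partial_at:
  fixes f :: "'e::euclidean_space \<Rightarrow> real"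
  assumes an: "real_analytic_on f S" and p: "p \<in> S" and b: "b \<in> Basis"
  shows "isCont f p \<and> (\<exists>\<rho>>0. \<exists>D. isCont D p \<and>
           (\<forall>v\<in>ball p \<rho>. ((\<lambda>t. f (v + t *\<^sub>R b)) has_real_derivative D v) (at 0)))"
proof -
  obtain r c where r: "r > 0" and hs: "\<And>v. v \<in> ball p r \<Longrightarrow>
      ((\<lambda>k. c k * monomial k (v - p)) has_sum f v) multi_indices"
    using an p unfolding real_analytic_on_def by blast
  define \<rho> where "\<rho> = r / (real DIM('e) + 1)"
  have \<rho>0: "\<rho> > 0" using r by (simp add: \<rho>_def)
  have \<rho>r: "\<rho> * real DIM('e) < r" using r unfolding \<rho>_def by (simp add: field_simps)
  have \<rho>r': "\<rho> < r" using r unfolding \<rho>_def by (simp add: field_simps)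
  define q where "q = p + \<rho> *\<^sub>R (\<Sum>b'\<in>(Basis::'e set). b')"
  have "norm (q - p) \<le> \<rho> * real DIM('e)"
  proof -
    have "norm (\<Sum>b'\<in>(Basis::'e set). b') \<le> (\<Sum>b'\<in>(Basis::'e set). norm b')" by (rule norm_sum)
    also have "\<dots> = real DIM('e)" by simp
    finally show ?thesis unfolding q_def using \<rho>0 by (simp add: mult_left_mono)
  qed
  then have q: "q \<in> ball p r" using \<rho>r by (simp add: dist_norm norm_minus_commute)
  define w where "w k = (\<Prod>b'\<in>(Basis::'e set). \<rho> ^ k b')" for k :: "'e \<Rightarrow> nat"
  have w0: "w k \<ge> 0" for k unfolding w_def using \<rho>0 by (intro prod_nonneg) auto
  have mq: "monomial k (q - p) = w k" for k
    unfolding monomial_def w_def q_def by (intro prod.cong refl) (simp add: inner_sumBasis)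
  have "(\<lambda>k. c k * w k) summable_on multi_indices"
    using hs[OF q] unfolding mq summable_on_def by blast
  then have "(\<lambda>k. norm (c k * w k)) summable_on multi_indices"
    by (rule summable_on_iff_abs_summable_on_real[THEN iffD1])
  then have Wsum: "(\<lambda>k. \<bar>c k\<bar> * w k) summable_on multi_indices"
    using w0 by (simp add: abs_mult)
  define W where "W k = \<bar>c k\<bar> * w k" for k
  have W0: "W k \<ge> 0" for k using w0 by (simp add: W_def)
  have W3: "(\<lambda>k. (3 / \<rho>) * W k) summable_on multi_indices"
    using Wsum unfolding W_def by (rule summable_on_cmult_right)
  have wsplit: "w k = \<rho> ^ k b * (\<Prod>b'\<in>Basis - {b}. \<rho> ^ k b')" for k
    unfolding w_def using b by (simp add: prod.remove)
  have Pmb: "\<bar>Pm b k z\<bar> \<le> (\<Prod>b'\<in>Basis - {b}. \<rho> ^ k b')"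
    if z: "\<And>b'. b' \<in> Basis \<Longrightarrow> \<bar>z \<bullet> b'\<bar> \<le> \<rho>" for k z
  proof -
    have "\<bar>Pm b k z\<bar> = (\<Prod>b'\<in>Basis - {b}. \<bar>z \<bullet> b'\<bar> ^ k b')"
      unfolding Pm_def by (simp add: abs_prod power_abs)
    also have "\<dots> \<le> (\<Prod>b'\<in>Basis - {b}. \<rho> ^ k b')"
      using z by (intro prod_mono) (auto intro: power_mono)
    finally show ?thesis .
  qed
  have monob: "\<bar>monomial k z\<bar> \<le> w k"
    if z: "\<And>b'. b' \<in> Basis \<Longrightarrow> \<bar>z \<bullet> b'\<bar> \<le> \<rho>" for k z
  proof -
    have "\<bar>monomial k z\<bar> = (\<Prod>b'\<in>Basis. \<bar>z \<bullet> b'\<bar> ^ k b')"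
      unfolding monomial_def by (simp add: abs_prod power_abs)
    also have "\<dots> \<le> w k" unfolding w_def
      using z by (intro prod_mono) (auto intro: power_mono)
    finally show ?thesis .
  qed
  have keyb: "real (k b) * R ^ (k b - 1) * \<bar>Pm b k z\<bar> \<le> (3 / \<rho>) * w k"
    if z: "\<And>b'. b' \<in> Basis \<Longrightarrow> \<bar>z \<bullet> b'\<bar> \<le> \<rho>" and R: "0 \<le> R" "R \<le> 3 * \<rho> / 4" for k z R
  proof (cases "k b")
    case 0 then show ?thesis using w0 \<rho>0 by simp
  next
    case (Suc n)
    have "real (k b) * R ^ (k b - 1) \<le> real (k b) * (3 * \<rho> / 4) ^ (k b - 1)"
      using R by (intro mult_left_mono power_mono) auto
    also have "\<dots> = (real (k b) * (3/4) ^ (k b - 1)) * \<rho> ^ n"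
      using Suc by (simp add: power_mult_distrib[symmetric] mult_ac)
    also have "\<dots> \<le> 3 * \<rho> ^ n"
      using n_34_bound[of "k b"] \<rho>0 by (intro mult_right_mono) auto
    finally have A: "real (k b) * R ^ (k b - 1) \<le> 3 * \<rho> ^ n" .
    have "real (k b) * R ^ (k b - 1) * \<bar>Pm b k z\<bar> \<le> 3 * \<rho> ^ n * (\<Prod>b'\<in>Basis - {b}. \<rho> ^ k b')"
      using \<rho>0 by (intro mult_mono[OF A Pmb[OF z]]) auto
    also have "\<dots> = (3 / \<rho>) * w k"
      unfolding wsplit Suc using \<rho>0 by (simp add: field_simps)
    finally show ?thesis .
  qed
  define dm where "dm k z = real (k b) * (z \<bullet> b) ^ (k b - 1) * Pm b k z" for k z
  define D where "D v = infsum (\<lambda>k. c k * dm k (v - p)) multi_indices" for v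
  have zb2: "\<bar>(v - p) \<bullet> b'\<bar> \<le> \<rho>/2" if "v \<in> ball p (\<rho>/2)" "b' \<in> Basis" for v b'
  proof -
    have "\<bar>(v - p) \<bullet> b'\<bar> \<le> norm (v - p)" using that(2) by (rule Basis_le_norm)
    also have "\<dots> < \<rho> / 2" using that(1) by (simp add: dist_norm norm_minus_commute)
    finally show ?thesis by simp
  qed
  have zb: "\<bar>(v - p) \<bullet> b'\<bar> \<le> \<rho>" if "v \<in> ball p (\<rho>/2)" "b' \<in> Basis" for v b'
    using zb2[OF that] \<rho>0 by simp
  have dmb: "\<bar>c k * dm k (v - p)\<bar> \<le> (3 / \<rho>) * W k" if "v \<in> ball p (\<rho>/2)" for v k
  proof -
    have R: "\<bar>(v - p) \<bullet> b\<bar> \<le> 3 * \<rho> / 4" using zb2[OF that b] \<rho>0 by simp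
    have "\<bar>dm k (v - p)\<bar> = real (k b) * \<bar>(v - p) \<bullet> b\<bar> ^ (k b - 1) * \<bar>Pm b k (v - p)\<bar>"
      unfolding dm_def by (simp add: abs_mult power_abs)
    also have "\<dots> \<le> (3 / \<rho>) * w k" using zb[OF that] R by (intro keyb) auto
    finally have "\<bar>c k\<bar> * \<bar>dm k (v - p)\<bar> \<le> \<bar>c k\<bar> * ((3 / \<rho>) * w k)" by (rule mult_left_mono) simp
    then show ?thesis unfolding W_def by (simp add: abs_mult mult_ac)
  qed

  have Wsum': "W summable_on multi_indices" using Wsum unfolding W_def .
  have fv: "f v = infsum (\<lambda>k. c k * monomial k (v - p)) multi_indices" if "v \<in> ball p r" for v
    using infsumI[OF hs[OF that]] by simp
  have evb: "eventually (\<lambda>v. v \<in> ball p (\<rho>/2)) (at p)"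
    using \<rho>0 by (intro eventually_at_in_open') auto
  have ballsub: "ball p (\<rho>/2) \<subseteq> ball p r" using \<rho>r' \<rho>0 by (intro subset_ball) simp
  have contf: "isCont f p"
  proof -
    have "((\<lambda>v. infsum (\<lambda>k. c k * monomial k (v - p)) multi_indices) \<longlongrightarrow>
            infsum (\<lambda>k. c k * monomial k (p - p)) multi_indices) (at p)"
    proof (rule tendsto_infsum_dominated[OF Wsum'])
      show "\<forall>\<^sub>F x in at p. \<forall>k\<in>multi_indices. \<bar>c k * monomial k (x - p)\<bar> \<le> W k"
        using evb
      proof eventually_elim
        case (elim v)
        show ?case using monob[of "v - p"] zb[OF elim] unfolding W_def
          by (auto simp: abs_mult intro: mult_left_mono)
      qed
      show "((\<lambda>x. c k * monomial k (x - p)) \<longlongrightarrow> c k * monomial k (p - p)) (at p)" for k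
        unfolding monomial_def by (intro tendsto_intros)
    qed
    moreover have "eventually (\<lambda>v. infsum (\<lambda>k. c k * monomial k (v - p)) multi_indices = f v) (at p)"
      using evb by eventually_elim (use fv ballsub in auto)
    ultimately have "(f \<longlongrightarrow> infsum (\<lambda>k. c k * monomial k (p - p)) multi_indices) (at p)"
      by (rule Lim_transform_eventually)
    moreover have "f p = infsum (\<lambda>k. c k * monomial k (p - p)) multi_indices"
      using fv[of p] r by simp
    ultimately show ?thesis unfolding isCont_def by simp
  qed
  have contD: "isCont D p"
  proof -
    have "((\<lambda>v. infsum (\<lambda>k. c k * dm k (v - p)) multi_indices) \<longlongrightarrow>
            infsum (\<lambda>k. c k * dm k (p - p)) multi_indices) (at p)"
    proof (rule tendsto_infsum_dominated[OF W3])
      show "\<forall>\<^sub>F x in at p. \<forall>k\<in>multi_indices. \<bar>c k * dm k (x - p)\<bar> \<le> 3 / \<rho> * W k"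
        using evb by eventually_elim (use dmb in auto)
      show "((\<lambda>x. c k * dm k (x - p)) \<longlongrightarrow> c k * dm k (p - p)) (at p)" for k
        unfolding dm_def Pm_def by (intro tendsto_intros)
    qed
    then show ?thesis unfolding isCont_def D_def .
  qed
  have deriv: "((\<lambda>t. f (v + t *\<^sub>R b)) has_real_derivative D v) (at 0)" if v: "v \<in> ball p (\<rho>/2)" for v
  proof -
    define z where "z = v - p"
    have nz: "norm z < \<rho>/2" using v by (simp add: z_def dist_norm norm_minus_commute)
    have ev0: "eventually (\<lambda>t. t \<noteq> 0 \<and> \<bar>t\<bar> < \<rho>/4) (at (0::real))"
      unfolding eventually_at using \<rho>0 by (intro exI[of _ "\<rho>/4"]) (auto simp: dist_real_def)
    define Q where "Q t = infsum (\<lambda>k. inverse t * (c k * monomial k (z + t *\<^sub>R b) - c k * monomial k z)) multi_indices" for t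
    have Qeq: "Q t = (f (v + t *\<^sub>R b) - f (v + 0 *\<^sub>R b)) / (t - 0)" if t: "\<bar>t\<bar> < \<rho>/4" for t
    proof -
      have "norm (v + t *\<^sub>R b - p) \<le> norm z + \<bar>t\<bar>"
        using b norm_triangle_ineq[of z "t *\<^sub>R b"] by (simp add: z_def algebra_simps)
      then have vt: "v + t *\<^sub>R b \<in> ball p r" using nz t \<rho>r' \<rho>0
        by (simp add: dist_norm norm_minus_commute)
      have h1: "((\<lambda>k. c k * monomial k (z + t *\<^sub>R b)) has_sum f (v + t *\<^sub>R b)) multi_indices"
        using hs[OF vt] by (simp add: z_def algebra_simps)
      have h0: "((\<lambda>k. c k * monomial k z) has_sum f v) multi_indices"
        using hs[of v] v ballsub by (auto simp: z_def)
      have "((\<lambda>k. inverse t * (c k * monomial k (z + t *\<^sub>R b) - c k * monomial k z)) has_sum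
              inverse t * (f (v + t *\<^sub>R b) - f v)) multi_indices"
        by (intro has_sum_cmult_right has_sum_diff' h1 h0)
      then show ?thesis unfolding Q_def by (simp add: infsumI divide_inverse mult.commute)
    qed
    have "(Q \<longlongrightarrow> infsum (\<lambda>k. c k * dm k z) multi_indices) (at 0)"
      unfolding Q_def
    proof (rule tendsto_infsum_dominated[OF W3])
      show "\<forall>\<^sub>F t in at 0. \<forall>k\<in>multi_indices.
              \<bar>inverse t * (c k * monomial k (z + t *\<^sub>R b) - c k * monomial k z)\<bar> \<le> 3 / \<rho> * W k"
        using ev0
      proof eventually_elim
        case (elim t)
        show ?case
        proof
          fix k :: "'e \<Rightarrow> nat"
          have zbb: "\<bar>z \<bullet> b'\<bar> \<le> \<rho>" if "b' \<in> Basis" for b' using zb[OF v that] by (simp add: z_def)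
          have zb4: "\<bar>z \<bullet> b\<bar> \<le> \<rho>/2" using zb2[OF v b] by (simp add: z_def)
          have m0: "monomial k z = (z \<bullet> b) ^ k b * Pm b k z"
            using monomial_split[OF b, of k z 0] by simp
          have "\<bar>(z \<bullet> b + t) ^ k b - (z \<bullet> b) ^ k b\<bar> \<le> real (k b) * (3 * \<rho> / 4) ^ (k b - 1) * \<bar>t\<bar>"
          proof -
            have "\<bar>z \<bullet> b + t\<bar> \<le> 3 * \<rho> / 4" using zb4 elim abs_triangle_ineq[of "z \<bullet> b" t] by linarith
            moreover have "\<bar>z \<bullet> b\<bar> \<le> 3 * \<rho> / 4" using zb4 \<rho>0 by linarith
            ultimately show ?thesis using pow_diff_bound[of "z \<bullet> b + t" "3 * \<rho> / 4" "z \<bullet> b" "k b"] by simp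
          qed
          then have "\<bar>(z \<bullet> b + t) ^ k b - (z \<bullet> b) ^ k b\<bar> * \<bar>Pm b k z\<bar> \<le>
                       real (k b) * (3 * \<rho> / 4) ^ (k b - 1) * \<bar>t\<bar> * \<bar>Pm b k z\<bar>"
            by (rule mult_right_mono) auto
          also have "\<dots> = real (k b) * (3 * \<rho> / 4) ^ (k b - 1) * \<bar>Pm b k z\<bar> * \<bar>t\<bar>" by (simp add: mult_ac)
          also have "\<dots> \<le> (3 / \<rho>) * w k * \<bar>t\<bar>"
            using keyb[of z "3 * \<rho> / 4" k] zbb \<rho>0 by (intro mult_right_mono) auto
          finally have A: "\<bar>(z \<bullet> b + t) ^ k b - (z \<bullet> b) ^ k b\<bar> * \<bar>Pm b k z\<bar> \<le> (3 / \<rho>) * w k * \<bar>t\<bar>" .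
          have "\<bar>inverse t * (c k * monomial k (z + t *\<^sub>R b) - c k * monomial k z)\<bar> =
                 \<bar>c k\<bar> * (\<bar>(z \<bullet> b + t) ^ k b - (z \<bullet> b) ^ k b\<bar> * \<bar>Pm b k z\<bar>) / \<bar>t\<bar>"
          proof -
            have "inverse t * (c k * monomial k (z + t *\<^sub>R b) - c k * monomial k z) =
                    inverse t * (c k * (((z \<bullet> b + t) ^ k b - (z \<bullet> b) ^ k b) * Pm b k z))"
              unfolding monomial_split[OF b] m0 by (simp add: algebra_simps)
            then show ?thesis by (simp only: abs_mult abs_inverse divide_inverse mult_ac)
          qed
          also have "\<dots> \<le> \<bar>c k\<bar> * ((3 / \<rho>) * w k * \<bar>t\<bar>) / \<bar>t\<bar>"
            using A elim by (intro divide_right_mono mult_left_mono) auto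
          also have "\<dots> = 3 / \<rho> * W k" using elim by (simp add: W_def)
          finally show "\<bar>inverse t * (c k * monomial k (z + t *\<^sub>R b) - c k * monomial k z)\<bar> \<le> 3 / \<rho> * W k" .
        qed
      qed
      show "((\<lambda>t. inverse t * (c k * monomial k (z + t *\<^sub>R b) - c k * monomial k z)) \<longlongrightarrow> c k * dm k z) (at 0)" for k
      proof -
        have d: "((\<lambda>t. c k * ((z \<bullet> b + t) ^ k b * Pm b k z)) has_field_derivative c k * dm k z) (at 0)"
          unfolding dm_def by (auto intro!: derivative_eq_intros)
        have d': "((\<lambda>t. c k * monomial k (z + t *\<^sub>R b)) has_field_derivative c k * dm k z) (at 0)"
          using d unfolding monomial_split[OF b] .
        show ?thesis using d'[unfolded has_field_derivative_iff]
          by (simp add: divide_inverse mult.commute)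
      qed
    qed
    moreover have "eventually (\<lambda>t. Q t = (f (v + t *\<^sub>R b) - f (v + 0 *\<^sub>R b)) / (t - 0)) (at 0)"
      using ev0 by eventually_elim (use Qeq in auto)
    ultimately have "((\<lambda>t. (f (v + t *\<^sub>R b) - f (v + 0 *\<^sub>R b)) / (t - 0)) \<longlongrightarrow> D v) (at 0)"
      unfolding D_def z_def by (rule Lim_transform_eventually)
    then show ?thesis unfolding has_field_derivative_iff .
  qed
  show ?thesis using contf contD deriv \<rho>0 by (intro conjI exI[of _ "\<rho>/2"] exI[of _ D]) auto
qed



lemma slice_cont:
  fixes h :: "real \<Rightarrow> real \<Rightarrow> real"
  assumes ch: "continuous_on {(w,x). c \<le> w \<and> w \<le> x \<and> x \<le> 1} (\<lambda>(w,x). h w x)"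
    and w: "c \<le> w" and ab: "w \<le> a"
  shows "continuous_on {a..1} (h w)"
proof -
  have "continuous_on {a..1} (\<lambda>x. (\<lambda>(w,x). h w x) (w, x))"
    by (rule continuous_on_compose2[OF ch]) (use w ab in \<open>auto intro!: continuous_intros\<close>)
  then show ?thesis by simp
qed

lemma deriv_moving_integral:
  fixes h hw :: "real \<Rightarrow> real \<Rightarrow> real" and c u0 :: real
  assumes cu: "c < u0" "u0 < 1" and c0: "0 \<le> c"
    and ch: "continuous_on {(w,x). c \<le> w \<and> w \<le> x \<and> x \<le> 1} (\<lambda>(w,x). h w x)"
    and chw: "continuous_on {(w,x). c \<le> w \<and> w \<le> x \<and> x \<le> 1} (\<lambda>(w,x). hw w x)"
    and der: "\<And>w x. c \<le> w \<Longrightarrow> w \<le> x \<Longrightarrow> x \<le> 1 \<Longrightarrow>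
                 ((\<lambda>w. h w x) has_real_derivative hw w x) (at w within {c..x})"
  shows "((\<lambda>w. integral {w..1} (h w)) has_real_derivative
            (- h u0 u0 + integral {u0..1} (hw u0))) (at u0)"
proof -
  define R where "R = {(w::real,x::real). c \<le> w \<and> w \<le> x \<and> x \<le> 1}"
  have Req: "R = ({c..1} \<times> {c..1}) \<inter> {p. fst p \<le> snd p}" unfolding R_def by auto
  have cR: "compact R" unfolding Req
    by (intro compact_Int_closed compact_Times compact_Icc closed_Collect_le continuous_intros)
  define L where "L = - h u0 u0 + integral {u0..1} (hw u0)"
  define \<Psi> where "\<Psi> w = integral {w..1} (h w)" for w
  have uch: "uniformly_continuous_on R (\<lambda>(w,x). h w x)"
    using ch cR unfolding R_def[symmetric] by (intro compact_uniformly_continuous)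
  have uchw: "uniformly_continuous_on R (\<lambda>(w,x). hw w x)"
    using chw cR unfolding R_def[symmetric] by (intro compact_uniformly_continuous)
  have "bounded ((\<lambda>(w,x). hw w x) ` R)"
    using chw cR unfolding R_def[symmetric] by (intro compact_imp_bounded compact_continuous_image)
  then obtain B0 where B0: "\<And>p. p \<in> R \<Longrightarrow> norm ((\<lambda>(w,x). hw w x) p) \<le> B0"
    unfolding bounded_iff by blast
  define B where "B = max B0 0"
  have B: "\<bar>hw w x\<bar> \<le> B" if "(w,x) \<in> R" for w x using B0[OF that] by (simp add: B_def)
  have B0': "B \<ge> 0" by (simp add: B_def)
  have "((\<lambda>u. (\<Psi> u - \<Psi> u0) / (u - u0)) \<longlongrightarrow> L) (at u0)"
    unfolding LIM_eq
  proof (intro allI impI)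
    fix e :: real assume e: "e > 0"
    define \<eta> where "\<eta> = e / 4"
    have \<eta>: "\<eta> > 0" using e by (simp add: \<eta>_def)
    obtain d1 where d1: "d1 > 0" and d1h: "\<And>p p'. p \<in> R \<Longrightarrow> p' \<in> R \<Longrightarrow> dist p' p < d1 \<Longrightarrow>
        dist ((\<lambda>(w,x). h w x) p') ((\<lambda>(w,x). h w x) p) < \<eta>"
      using uch \<eta> unfolding uniformly_continuous_on_def by metis
    obtain d2 where d2: "d2 > 0" and d2h: "\<And>p p'. p \<in> R \<Longrightarrow> p' \<in> R \<Longrightarrow> dist p' p < d2 \<Longrightarrow>
        dist ((\<lambda>(w,x). hw w x) p') ((\<lambda>(w,x). hw w x) p) < \<eta>"
      using uchw \<eta> unfolding uniformly_continuous_on_def by metis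
    define d where "d = min (min (d1/2) d2) (min (u0 - c) (min (1 - u0) (\<eta> / (B + 1))))"
    have d: "d > 0" using d1 d2 cu \<eta> B0' by (simp add: d_def)
    show "\<exists>s>0. \<forall>u. u \<noteq> u0 \<and> norm (u - u0) < s \<longrightarrow> norm ((\<Psi> u - \<Psi> u0) / (u - u0) - L) < e"
    proof (intro exI[of _ d] conjI allI impI d)
      fix u assume u: "u \<noteq> u0 \<and> norm (u - u0) < d"
      have ud: "\<bar>u - u0\<bar> < d" using u by simp
      have ud1: "2 * \<bar>u - u0\<bar> < d1" "\<bar>u - u0\<bar> < d2" using ud by (auto simp: d_def)
      have uc: "c < u" "u < 1" using ud by (auto simp: d_def)
      have uB: "B * \<bar>u - u0\<bar> \<le> \<eta>"
      proof -
        have "B * \<bar>u - u0\<bar> \<le> B * (\<eta> / (B + 1))"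
          using ud B0' by (intro mult_left_mono) (auto simp: d_def)
        also have "\<dots> \<le> \<eta>" using B0' \<eta> by (simp add: field_simps)
        finally show ?thesis .
      qed
      define m where "m = max u u0"
      define lo where "lo = min u u0"
      have m: "u \<le> m" "u0 \<le> m" "m < 1" "c < lo" "lo \<le> m" using uc cu by (auto simp: m_def lo_def)
      have cont_hu: "continuous_on {a..1} (h u)" if "u \<le> a" for a
        using slice_cont[OF ch _ that] uc by simp
      have cont_hu0: "continuous_on {a..1} (h u0)" if "u0 \<le> a" for a
        using slice_cont[OF ch _ that] cu by simp
      have cont_hwu0: "continuous_on {a..1} (hw u0)" if "u0 \<le> a" for a
        using slice_cont[OF chw _ that] cu by simp
      have int: "f integrable_on {a..1}" if "continuous_on {a..1} f" for f :: "real \<Rightarrow> real" and a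
        using that by (rule integrable_continuous_interval)
      have mvt: "\<bar>h u x - h u0 x - (u - u0) * hw u0 x\<bar> \<le> \<eta> * \<bar>u - u0\<bar>" if x: "x \<in> {m..1}" for x
      proof -
        define \<phi> where "\<phi> w = h w x - w * hw u0 x" for w
        have "norm (\<phi> u - \<phi> u0) \<le> \<eta> * norm (u - u0)"
        proof (rule field_differentiable_bound[of "{lo..m}" \<phi> "\<lambda>w. hw w x - hw u0 x"])
          show "convex {lo..m}" by simp
          show "u \<in> {lo..m}" "u0 \<in> {lo..m}" by (auto simp: lo_def m_def)
          fix w assume w: "w \<in> {lo..m}"
          have wR: "(w, x) \<in> R" "(u0, x) \<in> R" using w x m cu by (auto simp: R_def)
          have "((\<lambda>w. h w x) has_real_derivative hw w x) (at w within {c..x})"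
            using der[of w x] w x m by auto
          then have "((\<lambda>w. h w x) has_real_derivative hw w x) (at w within {lo..m})"
            by (rule has_field_derivative_subset) (use x m in auto)
          then show "(\<phi> has_field_derivative hw w x - hw u0 x) (at w within {lo..m})"
            unfolding \<phi>_def by (auto intro!: derivative_eq_intros)
          have "dist (w, x) (u0, x) < d2"
            using w ud1 by (auto simp: dist_Pair_Pair dist_real_def lo_def m_def)
          then show "norm (hw w x - hw u0 x) \<le> \<eta>"
            using d2h[OF wR(2) wR(1)] by (simp add: dist_real_def)
        qed
        then show ?thesis by (simp add: \<phi>_def algebra_simps)
      qed
      have I1: "\<bar>integral {m..1} (\<lambda>x. h u x - h u0 x - (u - u0) * hw u0 x)\<bar> \<le> \<eta> * \<bar>u - u0\<bar>"
      proof -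
        have "norm (integral {m..1} (\<lambda>x. h u x - h u0 x - (u - u0) * hw u0 x)) \<le> (\<eta> * \<bar>u - u0\<bar>) * (1 - m)"
          using m mvt
          by (intro integral_bound) (auto intro!: continuous_intros cont_hu cont_hu0 cont_hwu0)
        also have "\<dots> \<le> \<eta> * \<bar>u - u0\<bar>" using m \<eta> cu uc c0
          by (intro mult_left_le) (auto simp: m_def)
        finally show ?thesis by simp
      qed
      have I1eq: "integral {m..1} (\<lambda>x. h u x - h u0 x - (u - u0) * hw u0 x) =
          integral {m..1} (h u) - integral {m..1} (h u0) - (u - u0) * integral {m..1} (hw u0)"
        using m
        by (subst integral_diff, (auto intro!: int continuous_intros cont_hu cont_hu0 cont_hwu0)[2],
            subst integral_diff, (auto intro!: int continuous_intros cont_hu cont_hu0 cont_hwu0)[2]) simp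
      have sp1: "\<Psi> u = integral {u..m} (h u) + integral {m..1} (h u)"
        unfolding \<Psi>_def by (rule Henstock_Kurzweil_Integration.integral_combine[symmetric]) (use m in \<open>auto intro!: int cont_hu\<close>)
      have sp2: "\<Psi> u0 = integral {u0..m} (h u0) + integral {m..1} (h u0)"
        unfolding \<Psi>_def by (rule Henstock_Kurzweil_Integration.integral_combine[symmetric]) (use m in \<open>auto intro!: int cont_hu0\<close>)
      have sp3: "integral {u0..1} (hw u0) = integral {u0..m} (hw u0) + integral {m..1} (hw u0)"
        by (rule Henstock_Kurzweil_Integration.integral_combine[symmetric]) (use m in \<open>auto intro!: int cont_hwu0\<close>)
      have I3: "\<bar>(u - u0) * integral {u0..m} (hw u0)\<bar> \<le> \<eta> * \<bar>u - u0\<bar>"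
      proof -
        have "norm (integral {u0..m} (hw u0)) \<le> B * (m - u0)"
        proof (rule integral_bound)
          show "continuous_on {u0..m} (hw u0)"
            using cont_hwu0[of u0] m by (auto elim: continuous_on_subset)
          fix t assume "t \<in> {u0..m}" then show "norm (hw u0 t) \<le> B"
            using B[of u0 t] m cu by (auto simp: R_def)
        qed (use m in auto)
        also have "\<dots> \<le> B * \<bar>u - u0\<bar>" using B0' by (intro mult_left_mono) (auto simp: m_def)
        finally have "\<bar>integral {u0..m} (hw u0)\<bar> \<le> B * \<bar>u - u0\<bar>" by simp
        then have "\<bar>(u - u0) * integral {u0..m} (hw u0)\<bar> \<le> \<bar>u - u0\<bar> * (B * \<bar>u - u0\<bar>)"
          by (simp add: abs_mult mult_left_mono)
        also have "\<dots> \<le> \<bar>u - u0\<bar> * \<eta>" using uB by (intro mult_left_mono) auto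
        finally show ?thesis by (simp add: mult.commute)
      qed
      have I2: "\<bar>integral {u..m} (h u) - integral {u0..m} (h u0) + (u - u0) * h u0 u0\<bar> \<le> \<eta> * \<bar>u - u0\<bar>"
      proof (cases "u < u0")
        case True
        then have mm: "m = u0" by (simp add: m_def)
        have "integral {u..m} (h u) - integral {u0..m} (h u0) + (u - u0) * h u0 u0 =
              integral {u..u0} (\<lambda>x. h u x - h u0 u0)"
        proof -
          have "h u integrable_on {u..u0}"
            by (rule integrable_continuous_interval, rule continuous_on_subset[OF cont_hu[of u]]) (use cu in auto)
          then show ?thesis using True mm
            by (subst integral_diff) (auto simp: algebra_simps)
        qed
        also have "\<bar>\<dots>\<bar> \<le> \<eta> * (u0 - u)"
        proof -
          have "norm (integral {u..u0} (\<lambda>x. h u x - h u0 u0)) \<le> \<eta> * (u0 - u)"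
          proof (rule integral_bound)
            show "continuous_on {u..u0} (\<lambda>x. h u x - h u0 u0)"
              using cont_hu[of u] True cu by (auto intro!: continuous_intros elim: continuous_on_subset)
            fix x assume x: "x \<in> {u..u0}"
            have pR: "(u, x) \<in> R" "(u0, u0) \<in> R" using x uc cu by (auto simp: R_def)
            have "dist (u, x) (u0, u0) \<le> \<bar>u - u0\<bar> + \<bar>x - u0\<bar>"
              unfolding dist_Pair_Pair dist_real_def by (rule sqrt_sum_squares_le_sum) auto
            also have "\<dots> < d1" using x ud1 True by auto
            finally show "norm (h u x - h u0 u0) \<le> \<eta>"
              using d1h[OF pR(2) pR(1)] by (simp add: dist_real_def)
          qed (use True in auto)
          then show ?thesis by simp
        qed
        finally show ?thesis using True by simp
      next
        case False
        then have mm: "m = u" and uu: "u0 < u" using u by (auto simp: m_def)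
        have "integral {u..m} (h u) - integral {u0..m} (h u0) + (u - u0) * h u0 u0 =
              - integral {u0..u} (\<lambda>x. h u0 x - h u0 u0)"
        proof -
          have "h u0 integrable_on {u0..u}"
            by (rule integrable_continuous_interval, rule continuous_on_subset[OF cont_hu0[of u0]]) (use uc in auto)
          then show ?thesis using uu mm
            by (subst integral_diff) (auto simp: algebra_simps)
        qed
        also have "\<bar>\<dots>\<bar> \<le> \<eta> * (u - u0)"
        proof -
          have "norm (integral {u0..u} (\<lambda>x. h u0 x - h u0 u0)) \<le> \<eta> * (u - u0)"
          proof (rule integral_bound)
            show "continuous_on {u0..u} (\<lambda>x. h u0 x - h u0 u0)"
              using cont_hu0[of u0] uu uc by (auto intro!: continuous_intros elim: continuous_on_subset)
            fix x assume x: "x \<in> {u0..u}"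
            have pR: "(u0, x) \<in> R" "(u0, u0) \<in> R" using x uc cu by (auto simp: R_def)
            have "dist (u0, x) (u0, u0) < d1" using x ud1 by (auto simp: dist_Pair_Pair dist_real_def)
            then show "norm (h u0 x - h u0 u0) \<le> \<eta>"
              using d1h[OF pR(2) pR(1)] by (simp add: dist_real_def)
          qed (use uu in auto)
          then show ?thesis by simp
        qed
        finally show ?thesis using uu by simp
      qed
      have tot: "\<Psi> u - \<Psi> u0 - (u - u0) * L =
          integral {m..1} (\<lambda>x. h u x - h u0 x - (u - u0) * hw u0 x)
          + (integral {u..m} (h u) - integral {u0..m} (h u0) + (u - u0) * h u0 u0)
          - (u - u0) * integral {u0..m} (hw u0)"
        unfolding I1eq sp1 sp2 L_def sp3 by (simp add: algebra_simps)
      have "\<bar>\<Psi> u - \<Psi> u0 - (u - u0) * L\<bar> \<le> 3 * (\<eta> * \<bar>u - u0\<bar>)"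
        unfolding tot using I1 I2 I3 by linarith
      also have "\<dots> < e * \<bar>u - u0\<bar>" using u e by (simp add: \<eta>_def)
      finally have "\<bar>\<Psi> u - \<Psi> u0 - (u - u0) * L\<bar> / \<bar>u - u0\<bar> < e"
        using u by (simp add: divide_less_eq)
      moreover have "(\<Psi> u - \<Psi> u0) / (u - u0) - L = (\<Psi> u - \<Psi> u0 - (u - u0) * L) / (u - u0)"
        using u by (simp add: field_simps)
      ultimately show "norm ((\<Psi> u - \<Psi> u0) / (u - u0) - L) < e" by (simp add: abs_divide)
    qed
  qed
  then show ?thesis unfolding has_field_derivative_iff \<Psi>_def L_def .
qed



lemma theta_nonneg: "theta \<mu> \<epsilon> \<ge> 0"
  unfolding theta_def by (auto intro: real_root_ge_zero)

lemma theta_pos_den: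
  assumes mu: "\<mu> \<ge> 1" and t: "t > theta \<mu> \<epsilon>"
  shows "t ^ \<mu> - \<epsilon> > 0"
proof (cases "\<epsilon> \<le> 0")
  case True
  then have "t > 0" using t by (simp add: theta_def)
  then show ?thesis using True zero_less_power[of t \<mu>] by linarith
next
  case False
  then have th: "theta \<mu> \<epsilon> = root \<mu> \<epsilon>" by (simp add: theta_def)
  have "root \<mu> \<epsilon> \<ge> 0" using False by (intro real_root_ge_zero) simp
  then have "root \<mu> \<epsilon> ^ \<mu> < t ^ \<mu>" using t th mu by (intro power_strict_mono) auto
  moreover have "root \<mu> \<epsilon> ^ \<mu> = \<epsilon>" using False mu by (intro real_root_pow_pos2) auto
  ultimately show ?thesis by simp
qed

lemma theta_le_root_abs:
  assumes mu: "\<mu> \<ge> 1"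
  shows "theta \<mu> \<epsilon> \<le> root \<mu> \<bar>\<epsilon>\<bar>"
  unfolding theta_def using mu by auto

lemma orbit_y_explicit:
  fixes V G :: "real \<Rightarrow> real"
  assumes u: "u = s + theta \<mu> \<epsilon>"
    and der: "\<And>t. t \<in> {u..1} \<Longrightarrow> (G has_real_derivative V t / (t * (t ^ \<mu> - \<epsilon>))) (at t within {u..1})"
    and x: "x \<in> {u..1}"
  shows "orbit_y \<mu> V \<epsilon> s x = exp (G u - G x)"
proof -
  define Y where "Y x = exp (G u - G x)" for x
  have Yder: "(Y has_real_derivative (- V t * Y t / (t * (t ^ \<mu> - \<epsilon>)))) (at t within {u..1})"
    if t: "t \<in> {u..1}" for t
  proof -
    have "(Y has_real_derivative Y t * (0 - V t / (t * (t ^ \<mu> - \<epsilon>)))) (at t within {u..1})"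
      unfolding Y_def by (auto intro!: derivative_eq_intros der[OF t])
    then show ?thesis by (simp add: field_simps)
  qed
  have uniq: "y x = Y x" if y1: "y u = 1"
     and yd: "\<forall>t\<in>{u..1}. (y has_real_derivative (- V t * y t / (t * (t ^ \<mu> - \<epsilon>)))) (at t within {u..1})"
   for y
  proof -
    define z where "z t = y t * exp (G t - G u)" for t
    have "(z has_real_derivative 0) (at t within {u..1})" if t: "t \<in> {u..1}" for t
    proof -
      have "(z has_real_derivative (- V t * y t / (t * (t ^ \<mu> - \<epsilon>))) * exp (G t - G u)
              + y t * (exp (G t - G u) * (V t / (t * (t ^ \<mu> - \<epsilon>)) - 0))) (at t within {u..1})"
        unfolding z_def using yd t by (auto intro!: derivative_eq_intros der[OF t])
      then show ?thesis by (simp add: field_simps)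
    qed
    then obtain k where k: "\<forall>t\<in>{u..1}. z t = k"
      using has_field_derivative_zero_constant[of "{u..1}" z] by auto
    have "u \<le> 1" using x by simp
    then have "k = 1" using k[rule_format, of u] y1 by (simp add: z_def)
    then have "y x * exp (G x - G u) = 1" using k x by (auto simp: z_def)
    then show ?thesis unfolding Y_def by (simp add: exp_diff field_simps)
  qed
  have "orbit_y \<mu> V \<epsilon> s x = Y x"
    unfolding orbit_y_def u[symmetric]
  proof (rule the_equality)
    show "\<exists>y. y u = 1 \<and> (\<forall>t\<in>{u..1}. (y has_real_derivative (- V t * y t / (t * (t ^ \<mu> - \<epsilon>)))) (at t within {u..1})) \<and> y x = Y x"
    proof -
      have "Y u = 1" by (simp add: Y_def)
      then show ?thesis using Yder by (intro exI[of _ Y]) auto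
    qed
    fix v assume "\<exists>y. y u = 1 \<and> (\<forall>t\<in>{u..1}. (y has_real_derivative (- V t * y t / (t * (t ^ \<mu> - \<epsilon>)))) (at t within {u..1})) \<and> y x = v"
    then obtain y where "y u = 1" "\<forall>t\<in>{u..1}. (y has_real_derivative (- V t * y t / (t * (t ^ \<mu> - \<epsilon>)))) (at t within {u..1})" "y x = v"
      by blast
    then show "v = Y x" using uniq by auto
  qed
  then show ?thesis by (simp add: Y_def)
qed



lemma dulac_deriv:
  fixes U Uy :: "real \<Rightarrow> real \<Rightarrow> real" and V :: "real \<Rightarrow> real"
  assumes mu: "\<mu> \<ge> 1"
    and Uc: "continuous_on ({-1..1} \<times> {-1..1}) (\<lambda>(x,y). U x y)"
    and Uyc: "continuous_on ({-1..1} \<times> {-1..1}) (\<lambda>(x,y). Uy x y)"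
    and Ud: "\<And>x y. x \<in> {-1..1} \<Longrightarrow> y \<in> {-1..1} \<Longrightarrow> (U x has_real_derivative Uy x y) (at y)"
    and Vc: "continuous_on {-1..1} V"
    and Vp: "\<And>x. x \<in> {-1..1} \<Longrightarrow> V x > 0"
    and s: "s > 0" and u: "u = s + theta \<mu> \<epsilon>" and u1: "u < 1"
  shows "((\<lambda>\<sigma>. dulac_time \<mu> U V \<epsilon> \<sigma>) has_real_derivative
           (- U u 1 / (u ^ \<mu> - \<epsilon>) + integral {u..1} (\<lambda>x. Uy x (exp (- integral {u..x} (\<lambda>t. V t / (t * (t ^ \<mu> - \<epsilon>))))) * exp (- integral {u..x} (\<lambda>t. V t / (t * (t ^ \<mu> - \<epsilon>)))) * (V u / (u * (u ^ \<mu> - \<epsilon>))) / (x ^ \<mu> - \<epsilon>)))) (at s)"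
proof -
  define g where "g t = V t / (t * (t ^ \<mu> - \<epsilon>))" for t
  define \<theta> where "\<theta> = theta \<mu> \<epsilon>"
  define c where "c = \<theta> + s / 2"
  have th0: "\<theta> \<ge> 0" unfolding \<theta>_def by (rule theta_nonneg)
  have c: "0 < c" "c < u" using th0 s u by (auto simp: c_def \<theta>_def)
  have den: "t ^ \<mu> - \<epsilon> > 0" if "c \<le> t" for t
    using theta_pos_den[OF mu, of \<epsilon> t] that s by (simp add: c_def \<theta>_def)
  have Vc': "continuous_on {c..1} V" by (rule continuous_on_subset[OF Vc]) (use c in auto)
  have nz: "t * (t ^ \<mu> - \<epsilon>) \<noteq> 0" if "t \<in> {c..1}" for t using den[of t] c that by auto
  have gc: "continuous_on {c..1} g"
    unfolding g_def by (intro continuous_intros Vc') (use nz in auto)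
  have gpos: "g t > 0" if "t \<in> {c..1}" for t
    using that Vp[of t] den[of t] c unfolding g_def by (auto intro!: divide_pos_pos)
  define G where "G x = integral {c..x} g" for x
  have gint: "g integrable_on {a..b}" if "c \<le> a" "b \<le> 1" for a b
    by (rule integrable_continuous_interval, rule continuous_on_subset[OF gc]) (use that in auto)
  have Gder: "(G has_real_derivative g t) (at t within {c..1})" if "t \<in> {c..1}" for t
    unfolding G_def has_real_derivative_iff_has_vector_derivative
    by (rule integral_has_vector_derivative[OF gc that])
  have Gcont: "continuous_on {c..1} G"
    unfolding G_def by (rule indefinite_integral_continuous_1[OF gint]) auto
  have Gdiff: "G x - G w = integral {w..x} g" if "c \<le> w" "w \<le> x" "x \<le> 1" for w x
  proof -
    have "integral {c..w} g + integral {w..x} g = integral {c..x} g"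
      by (rule Henstock_Kurzweil_Integration.integral_combine) (use that in \<open>auto intro!: gint\<close>)
    then show ?thesis unfolding G_def by simp
  qed
  have Gmono: "G w \<le> G x" if "c \<le> w" "w \<le> x" "x \<le> 1" for w x
  proof -
    have "0 \<le> integral {w..x} g"
      by (rule integral_nonneg) (use that gpos in \<open>auto intro!: gint less_imp_le\<close>)
    then show ?thesis using Gdiff[OF that] by simp
  qed
  define h where "h w x = U x (exp (G w - G x)) / (x ^ \<mu> - \<epsilon>)" for w x
  define hw where "hw w x = Uy x (exp (G w - G x)) * exp (G w - G x) * g w / (x ^ \<mu> - \<epsilon>)" for w x
  define R where "R = {(w::real,x::real). c \<le> w \<and> w \<le> x \<and> x \<le> 1}"
  have Rsub: "R \<subseteq> {c..1} \<times> {c..1}" unfolding R_def by auto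
  have Gfst: "continuous_on R (\<lambda>p. G (fst p))"
    by (rule continuous_on_compose2[OF Gcont]) (use Rsub in \<open>auto intro!: continuous_intros\<close>)
  have Gsnd: "continuous_on R (\<lambda>p. G (snd p))"
    by (rule continuous_on_compose2[OF Gcont]) (use Rsub in \<open>auto intro!: continuous_intros\<close>)
  have gfst: "continuous_on R (\<lambda>p. g (fst p))"
    by (rule continuous_on_compose2[OF gc]) (use Rsub in \<open>auto intro!: continuous_intros\<close>)
  have expR: "exp (G w - G x) \<in> {-1..1}" if "(w, x) \<in> R" for w x
  proof -
    have "G w \<le> G x" using that by (intro Gmono) (auto simp: R_def)
    then have "exp (G w - G x) \<le> 1" by simp
    moreover have "- 1 \<le> exp (G w - G x)" by (rule order_trans[of _ 0]) auto
    ultimately show ?thesis by simp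
  qed
  have xR: "x \<in> {-1..1}" if "(w, x) \<in> R" for w x using that c by (auto simp: R_def)
  have mapc: "continuous_on R (\<lambda>p. (snd p, exp (G (fst p) - G (snd p))))"
    by (intro continuous_intros Gfst Gsnd)
  have mapR: "(\<lambda>p. (snd p, exp (G (fst p) - G (snd p)))) ` R \<subseteq> {-1..1} \<times> {-1..1}"
    using expR xR by fastforce
  have Uc': "continuous_on R (\<lambda>p. U (snd p) (exp (G (fst p) - G (snd p))))"
    using continuous_on_compose2[OF Uc mapc mapR] by simp
  have Uyc': "continuous_on R (\<lambda>p. Uy (snd p) (exp (G (fst p) - G (snd p))))"
    using continuous_on_compose2[OF Uyc mapc mapR] by simp
  have denR: "continuous_on R (\<lambda>p. snd p ^ \<mu> - \<epsilon>)" by (intro continuous_intros)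
  have denR0: "snd p ^ \<mu> - \<epsilon> \<noteq> 0" if "p \<in> R" for p using den[of "snd p"] that by (auto simp: R_def)
  have ch: "continuous_on R (\<lambda>(w,x). h w x)"
  proof -
    have "continuous_on R (\<lambda>p. U (snd p) (exp (G (fst p) - G (snd p))) / (snd p ^ \<mu> - \<epsilon>))"
      by (intro continuous_intros Uc' denR) (use denR0 in auto)
    then show ?thesis by (simp add: h_def case_prod_beta)
  qed
  have chw: "continuous_on R (\<lambda>(w,x). hw w x)"
  proof -
    have "continuous_on R (\<lambda>p. Uy (snd p) (exp (G (fst p) - G (snd p))) * exp (G (fst p) - G (snd p)) * g (fst p) / (snd p ^ \<mu> - \<epsilon>))"
      by (intro continuous_intros Uyc' denR Gfst Gsnd gfst) (use denR0 in auto)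
    then show ?thesis by (simp add: hw_def case_prod_beta)
  qed
  have der: "((\<lambda>w. h w x) has_real_derivative hw w x) (at w within {c..x})"
    if wx: "c \<le> w" "w \<le> x" "x \<le> 1" for w x
  proof -
    have Gw: "(G has_real_derivative g w) (at w within {c..x})"
      using Gder[of w] wx by (auto intro: has_field_derivative_subset)
    have e: "((\<lambda>w. exp (G w - G x)) has_real_derivative exp (G w - G x) * (g w - 0)) (at w within {c..x})"
      by (auto intro!: derivative_eq_intros Gw)
    have "((\<lambda>w. U x (exp (G w - G x))) has_real_derivative Uy x (exp (G w - G x)) * (exp (G w - G x) * (g w - 0))) (at w within {c..x})"
      by (rule DERIV_chain2[OF Ud e]) (use xR[of w x] expR[of w x] wx in \<open>auto simp: R_def\<close>)
    from DERIV_cdivide[OF this, of "x ^ \<mu> - \<epsilon>"] show ?thesis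
      unfolding h_def hw_def by (simp add: mult_ac)
  qed
  have Psi: "((\<lambda>w. integral {w..1} (h w)) has_real_derivative (- h u u + integral {u..1} (hw u))) (at u)"
    by (rule deriv_moving_integral[OF c(2) u1 less_imp_le[OF c(1)] ch[unfolded R_def] chw[unfolded R_def] der])
  have L: "- h u u + integral {u..1} (hw u) =
     - U u 1 / (u ^ \<mu> - \<epsilon>) + integral {u..1} (\<lambda>x. Uy x (exp (- integral {u..x} g)) * exp (- integral {u..x} g) * g u / (x ^ \<mu> - \<epsilon>))"
  proof -
    have "integral {u..1} (hw u) = integral {u..1} (\<lambda>x. Uy x (exp (- integral {u..x} g)) * exp (- integral {u..x} g) * g u / (x ^ \<mu> - \<epsilon>))"
    proof (rule integral_cong)
      fix x assume x: "x \<in> {u..1}"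
      then have "G u - G x = - integral {u..x} g" using Gdiff[of u x] c by auto
      then show "hw u x = Uy x (exp (- integral {u..x} g)) * exp (- integral {u..x} g) * g u / (x ^ \<mu> - \<epsilon>)"
        by (simp add: hw_def)
    qed
    then show ?thesis by (simp add: h_def)
  qed
  define Op where "Op = {s/2 <..< 1 - \<theta>}"
  have sO: "s \<in> Op" using s u u1 by (auto simp: Op_def \<theta>_def)
  have eqO: "integral {\<sigma> + \<theta>..1} (h (\<sigma> + \<theta>)) = dulac_time \<mu> U V \<epsilon> \<sigma>" if "\<sigma> \<in> Op" for \<sigma>
  proof -
    have sg: "c \<le> \<sigma> + \<theta>" "\<sigma> + \<theta> \<le> 1" using that by (auto simp: Op_def c_def)
    have orb: "orbit_y \<mu> V \<epsilon> \<sigma> x = exp (G (\<sigma> + \<theta>) - G x)" if x: "x \<in> {\<sigma> + \<theta>..1}" for x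
    proof (rule orbit_y_explicit[of "\<sigma> + \<theta>" \<sigma> \<mu> \<epsilon>])
      show "\<sigma> + \<theta> = \<sigma> + theta \<mu> \<epsilon>" by (simp add: \<theta>_def)
      show "x \<in> {\<sigma> + \<theta>..1}" using x .
      fix t assume t: "t \<in> {\<sigma> + \<theta>..1}"
      have "(G has_real_derivative g t) (at t within {c..1})" using Gder[of t] t sg by auto
      then show "(G has_real_derivative V t / (t * (t ^ \<mu> - \<epsilon>))) (at t within {\<sigma> + \<theta>..1})"
        unfolding g_def by (rule has_field_derivative_subset) (use sg in auto)
    qed
    show ?thesis unfolding dulac_time_def \<theta>_def[symmetric]
      by (rule integral_cong) (simp add: h_def orb)
  qed
  have "((\<lambda>\<sigma>. integral {\<sigma> + \<theta>..1} (h (\<sigma> + \<theta>))) has_real_derivative (- h u u + integral {u..1} (hw u))) (at s)"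
  proof -
    have "((\<lambda>w. integral {w..1} (h w)) has_real_derivative (- h u u + integral {u..1} (hw u))) (at (s + \<theta>))"
      using Psi u by (simp add: \<theta>_def)
    from DERIV_shift[THEN iffD1, OF this] show ?thesis by simp
  qed
  then have "((\<lambda>\<sigma>. dulac_time \<mu> U V \<epsilon> \<sigma>) has_real_derivative (- h u u + integral {u..1} (hw u))) (at s)"
    by (rule has_field_derivative_transform_within_open[of _ _ _ Op]) (use sO eqO in \<open>auto simp: Op_def\<close>)
  then show ?thesis unfolding L g_def .
qed



lemma ftc_real:
  fixes f f' :: "real \<Rightarrow> real"
  assumes "a \<le> b" "\<And>x. x \<in> {a..b} \<Longrightarrow> (f has_real_derivative f' x) (at x within {a..b})"
  shows "integral {a..b} f' = f b - f a"
  using fundamental_theorem_of_calculus[OF assms(1), of f f'] assms(2)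
  by (auto simp: has_real_derivative_iff_has_vector_derivative integral_unique)

lemma int_pow_bound:
  fixes u :: real and k :: nat
  assumes u: "0 < u" "u \<le> 1" and k: "k \<ge> 2"
  shows "integral {u..1} (\<lambda>x. (u / x) ^ k) \<le> u / (real k - 1)"
proof -
  define F where "F x = x * (u / x) ^ k / (1 - real k)" for x
  have "integral {u..1} (\<lambda>x. (u / x) ^ k) = F 1 - F u"
  proof (rule ftc_real)
    show "u \<le> 1" using u by simp
    fix x assume x: "x \<in> {u..1}"
    then have x0: "x > 0" using u by auto
    have "(F has_real_derivative (1 * (u / x) ^ k + x * (real k * (u / x) ^ (k - 1) * (- u / x^2))) / (1 - real k)) (at x within {u..1})"
      unfolding F_def using x0 k by (auto intro!: derivative_eq_intros simp: power2_eq_square)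
    moreover have "(1 * (u / x) ^ k + x * (real k * (u / x) ^ (k - 1) * (- u / x^2))) / (1 - real k) = (u / x) ^ k"
    proof -
      have "x * (real k * (u / x) ^ (k - 1) * (- u / x^2)) = - real k * (u / x) ^ k"
      proof -
        have "(u / x) ^ k = (u / x) ^ (k - 1) * (u / x)" using k by (simp add: power_eq_if)
        then show ?thesis using x0 by (simp add: field_simps power2_eq_square)
      qed
      moreover have "(1 * P + - real k * P) / (1 - real k) = P" for P :: real
      proof -
        have "1 - real k \<noteq> 0" using k by simp
        then show ?thesis by (simp add: field_simps)
      qed
      ultimately show ?thesis by simp
    qed
    ultimately show "(F has_real_derivative (u / x) ^ k) (at x within {u..1})" by simp
  qed
  also have "F 1 - F u = (u - u ^ k) / (real k - 1)"
  proof -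
    have "F 1 = u ^ k / (1 - real k)" by (simp add: F_def)
    moreover have "F u = u / (1 - real k)" using u by (simp add: F_def)
    moreover have "u ^ k / (1 - real k) - u / (1 - real k) = (u - u ^ k) / (real k - 1)"
    proof -
      have "(a - b) / (1 - K) = (b - a) / (K - 1::real)" for a b K
        by (metis minus_diff_eq minus_divide_divide)
      then show ?thesis by (simp add: diff_divide_distrib[symmetric])
    qed
    ultimately show ?thesis by simp
  qed
  also have "\<dots> \<le> u / (real k - 1)"
    using u k by (intro divide_right_mono) auto
  finally show ?thesis .
qed

lemma dulac_bound:
  fixes U Uy :: "real \<Rightarrow> real \<Rightarrow> real" and V :: "real \<Rightarrow> real" and k :: nat
  assumes mu: "\<mu> \<ge> 1"
    and Uc: "continuous_on ({-1..1} \<times> {-1..1}) (\<lambda>(x,y). U x y)"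
    and Uyc: "continuous_on ({-1..1} \<times> {-1..1}) (\<lambda>(x,y). Uy x y)"
    and Ud: "\<And>x y. x \<in> {-1..1} \<Longrightarrow> y \<in> {-1..1} \<Longrightarrow> (U x has_real_derivative Uy x y) (at y)"
    and Vc: "continuous_on {-1..1} V"
    and v0: "0 < v0" and Vlo: "\<And>x. x \<in> {0..1} \<Longrightarrow> v0 \<le> V x"
    and Vhi: "\<And>x. x \<in> {0..1} \<Longrightarrow> V x \<le> V1"
    and B0: "0 \<le> B" and QB: "\<And>x y. x \<in> {0..1} \<Longrightarrow> y \<in> {0..1} \<Longrightarrow> \<bar>Uy x y / V x\<bar> \<le> B"
    and d1: "\<delta>1 > 0"
    and Qc: "\<And>x x' y. x \<in> {0..1} \<Longrightarrow> x' \<in> {0..1} \<Longrightarrow> y \<in> {0..1} \<Longrightarrow> \<bar>x - x'\<bar> < \<delta>1 \<Longrightarrow>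
               \<bar>Uy x y / V x - Uy x' y / V x'\<bar> \<le> \<eta>"
    and c0: "\<And>x y. x \<in> {0..1} \<Longrightarrow> y \<in> {0..1} \<Longrightarrow> x + y < \<rho>U \<Longrightarrow> c0 \<le> U x y"
    and k: "k \<ge> 2" and r: "0 < r" "r \<le> 1" and rk: "r ^ \<mu> + \<bar>\<epsilon>\<bar> \<le> v0 / real k"
    and s: "s > 0" and u: "u = s + theta \<mu> \<epsilon>" and ur: "u < r"
    and u\<rho>: "u + (u + u / r ^ k) < \<rho>U"
  shows "- U u 1 / (u ^ \<mu> - \<epsilon>) + integral {u..1} (\<lambda>x. Uy x (exp (- integral {u..x} (\<lambda>t. V t / (t * (t ^ \<mu> - \<epsilon>))))) * exp (- integral {u..x} (\<lambda>t. V t / (t * (t ^ \<mu> - \<epsilon>)))) * (V u / (u * (u ^ \<mu> - \<epsilon>))) / (x ^ \<mu> - \<epsilon>))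
      \<le> (- c0 + V1 * (\<eta> + (B + 2 * B / \<delta>1) * (1 / (real k - 1) + u / r ^ k))) / (u ^ \<mu> - \<epsilon>)"
proof -
  define g where "g t = V t / (t * (t ^ \<mu> - \<epsilon>))" for t
  define Gu where "Gu x = integral {u..x} g" for x
  define Y where "Y x = exp (- Gu x)" for x
  define Q where "Q x y = Uy x y / V x" for x y
  define B2 where "B2 = B + 2 * B / \<delta>1"
  define den where "den = u ^ \<mu> - \<epsilon>"
  have th0: "theta \<mu> \<epsilon> \<ge> 0" by (rule theta_nonneg)
  have u0: "0 < u" using s th0 u by linarith
  have u1: "u < 1" using ur r by linarith
  have u1': "u \<le> 1" using u1 by linarith
  have dpos: "t ^ \<mu> - \<epsilon> > 0" if "u \<le> t" for t
    using theta_pos_den[OF mu, of \<epsilon> t] that s u by simp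
  have den0: "den > 0" unfolding den_def using dpos[of u] by simp
  have Vc': "continuous_on {u..1} V" by (rule continuous_on_subset[OF Vc]) (use u0 in auto)
  have Vpos: "V x > 0" if "x \<in> {u..1}" for x using Vlo[of x] v0 that u0 by auto
  have gc: "continuous_on {u..1} g"
  proof -
    have nz: "t * (t ^ \<mu> - \<epsilon>) \<noteq> 0" if "t \<in> {u..1}" for t using dpos[of t] u0 that by auto
    show ?thesis unfolding g_def by (intro continuous_intros Vc') (use nz in auto)
  qed
  have gpos: "g t > 0" if "t \<in> {u..1}" for t
    using that Vpos[of t] dpos[of t] u0 unfolding g_def by (auto intro!: divide_pos_pos)
  have gint: "g integrable_on {a..b}" if "u \<le> a" "b \<le> 1" for a b
    by (rule integrable_continuous_interval, rule continuous_on_subset[OF gc]) (use that in auto)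
  have Gder: "(Gu has_real_derivative g t) (at t within {u..1})" if "t \<in> {u..1}" for t
    unfolding Gu_def has_real_derivative_iff_has_vector_derivative
    by (rule integral_has_vector_derivative[OF gc that])
  have Gc: "continuous_on {u..1} Gu"
    unfolding Gu_def by (rule indefinite_integral_continuous_1[OF gint]) auto
  have Gdiff: "Gu x' = Gu x + integral {x..x'} g" if "u \<le> x" "x \<le> x'" "x' \<le> 1" for x x'
  proof -
    have "integral {u..x} g + integral {x..x'} g = integral {u..x'} g"
      by (rule Henstock_Kurzweil_Integration.integral_combine) (use that in \<open>auto intro!: gint\<close>)
    then show ?thesis unfolding Gu_def by simp
  qed
  have intg_nonneg: "0 \<le> integral {a..b} g" if "u \<le> a" "a \<le> b" "b \<le> 1" for a b
    by (rule integral_nonneg) (use that gpos in \<open>auto intro!: gint less_imp_le\<close>)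
  have Gnn: "0 \<le> Gu x" if "x \<in> {u..1}" for x
    unfolding Gu_def using that by (intro intg_nonneg) auto
  have Yder: "(Y has_real_derivative - (g t * Y t)) (at t within {u..1})" if "t \<in> {u..1}" for t
  proof -
    have "(Y has_real_derivative Y t * (- g t)) (at t within {u..1})"
      unfolding Y_def by (auto intro!: derivative_eq_intros Gder[OF that])
    then show ?thesis by (simp add: mult_ac)
  qed
  have Yc: "continuous_on {u..1} Y" unfolding Y_def by (intro continuous_intros Gc)
  have Yu: "Y u = 1" by (simp add: Y_def Gu_def)
  have Y01: "Y x \<in> {0..1}" "Y x \<in> {-1..1}" "Y x > 0" if "x \<in> {u..1}" for x
    using Gnn[OF that] by (auto simp: Y_def intro: order_trans[of _ 0])
  have Ymono: "Y x' \<le> Y x" if "u \<le> x" "x \<le> x'" "x' \<le> 1" for x x'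
    using Gdiff[OF that] intg_nonneg[OF that] by (simp add: Y_def)
  have Ysmall: "Y x \<le> (u / x) ^ k" if x: "u \<le> x" "x \<le> r" for x
  proof -
    have x0: "x > 0" using x u0 by simp
    have "integral {u..x} (\<lambda>t. real k / t) = real k * ln x - real k * ln u"
    proof (rule ftc_real)
      show "u \<le> x" using x by simp
      fix t assume "t \<in> {u..x}" then have "t > 0" using u0 by auto
      then show "((\<lambda>t. real k * ln t) has_real_derivative real k / t) (at t within {u..x})"
        by (auto intro!: derivative_eq_intros)
    qed
    moreover have "integral {u..x} (\<lambda>t. real k / t) \<le> integral {u..x} g"
    proof (rule integral_le)
      show "(\<lambda>t. real k / t) integrable_on {u..x}"
        by (rule integrable_continuous_interval) (use u0 in \<open>auto intro!: continuous_intros\<close>)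
      show "g integrable_on {u..x}" using x r by (intro gint) auto
      fix t assume t: "t \<in> {u..x}"
      then have t0: "t > 0" using u0 by auto
      have "t ^ \<mu> \<le> r ^ \<mu>" using t x t0 by (intro power_mono) auto
      then have "t ^ \<mu> - \<epsilon> \<le> v0 / real k" using rk by linarith
      then have "real k * (t ^ \<mu> - \<epsilon>) \<le> v0" using k by (simp add: field_simps)
      also have "\<dots> \<le> V t" using Vlo[of t] t x r t0 by auto
      finally have kV: "real k * (t ^ \<mu> - \<epsilon>) \<le> V t" .
      have dp: "t ^ \<mu> - \<epsilon> > 0" using dpos[of t] t by auto
      have "real k / t = real k * (t ^ \<mu> - \<epsilon>) / (t * (t ^ \<mu> - \<epsilon>))" using t0 dp by simp
      also have "\<dots> \<le> V t / (t * (t ^ \<mu> - \<epsilon>))" using kV t0 dp by (intro divide_right_mono) auto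
      finally show "real k / t \<le> g t" unfolding g_def .
    qed
    ultimately have "real k * (ln x - ln u) \<le> Gu x" unfolding Gu_def by (simp add: algebra_simps)
    then have "Y x \<le> exp (- (real k * (ln x - ln u)))" unfolding Y_def by simp
    also have "- (real k * (ln x - ln u)) = real k * ln (u / x)" using x0 u0 by (simp add: ln_div algebra_simps)
    also have "exp (real k * ln (u / x)) = (u / x) ^ k" using x0 u0 by (simp add: exp_of_nat_mult)
    finally show ?thesis .
  qed
  have Ybound: "Y x \<le> (u / x) ^ k + (u / r) ^ k" if x: "x \<in> {u..1}" for x
  proof (cases "x \<le> r")
    case True
    then show ?thesis using Ysmall[of x] x u0 by (auto intro: order_trans[OF _ le_add_same_cancel1[THEN iffD2]] simp: zero_le_power)
  next
    case False
    then have "Y x \<le> Y r" using x ur by (intro Ymono) auto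
    also have "\<dots> \<le> (u / r) ^ k" using Ysmall[of r] ur by auto
    finally have "Y x \<le> (u / r) ^ k" . moreover have "0 \<le> (u / x) ^ k" using x u0 by simp ultimately show ?thesis by linarith
  qed
  have ur_le: "(u / r) ^ k \<le> u * (u / r ^ k)"
  proof -
    have "(u / r) ^ k = u ^ k / r ^ k" by (simp add: power_divide)
    also have "u ^ k \<le> u ^ 2" using u0 u1' k by (intro power_decreasing) auto
    then have "u ^ k / r ^ k \<le> u ^ 2 / r ^ k" using r by (intro divide_right_mono) auto
    finally show ?thesis by (simp add: power2_eq_square)
  qed
  have Y1b: "Y 1 \<le> u + u / r ^ k"
  proof -
    have "Y 1 \<le> (u / 1) ^ k + (u / r) ^ k" using Ybound[of 1] u1 by auto
    moreover have "u ^ k \<le> u" using u0 u1' k by (intro power_le_one_iff[THEN iffD2] order_trans[OF power_decreasing[of 1 k u]]) auto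
    moreover have "(u / r) ^ k \<le> u / r ^ k"
    proof -
      have "u ^ k \<le> u" using u0 u1' k power_decreasing[of 1 k u] by simp
      then show ?thesis using r by (simp add: power_divide divide_right_mono)
    qed
    ultimately show ?thesis by simp
  qed
  have IntY: "integral {u..1} Y \<le> u / (real k - 1) + u * (u / r ^ k)"
  proof -
    have "integral {u..1} Y \<le> integral {u..1} (\<lambda>x. (u / x) ^ k + (u / r) ^ k)"
      by (rule integral_le) (use Yc Ybound u0 in \<open>auto intro!: integrable_continuous_interval continuous_intros\<close>)
    also have "\<dots> = integral {u..1} (\<lambda>x. (u / x) ^ k) + (1 - u) * (u / r) ^ k"
      by (subst integral_add) (use u0 u1 in \<open>auto intro!: integrable_continuous_interval continuous_intros\<close>)
    also have "\<dots> \<le> u / (real k - 1) + u * (u / r ^ k)"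
    proof -
      have "(1 - u) * (u / r) ^ k \<le> (u / r) ^ k" using u0 r by (simp add: mult_left_le_one_le)
      then show ?thesis using int_pow_bound[OF u0 u1' k] ur_le by linarith
    qed
    finally show ?thesis .
  qed
  have Yimg: "(\<lambda>x. (x, Y x)) ` {u..1} \<subseteq> {-1..1} \<times> {-1..1}" using Y01 u0 by auto
  have Yimg2: "(\<lambda>x. (u, Y x)) ` {u..1} \<subseteq> {-1..1} \<times> {-1..1}" using Y01 u0 u1 by auto
  have Uyx: "continuous_on {u..1} (\<lambda>x. Uy x (Y x))"
  proof -
    have "continuous_on {u..1} (\<lambda>x. (x, Y x))" by (intro continuous_intros Yc)
    from continuous_on_compose2[OF Uyc this Yimg] show ?thesis by simp
  qed
  have Uyu: "continuous_on {u..1} (\<lambda>x. Uy u (Y x))"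
  proof -
    have "continuous_on {u..1} (\<lambda>x. (u, Y x))" by (intro continuous_intros Yc)
    from continuous_on_compose2[OF Uyc this Yimg2] show ?thesis by simp
  qed
  have Vnz: "V x \<noteq> 0" if "x \<in> {u..1}" for x using Vpos[OF that] by simp
  have ic: "f integrable_on {u..1}" if "continuous_on {u..1} f" for f :: "real \<Rightarrow> real"
    using that by (rule integrable_continuous_interval)
  have gYc: "continuous_on {u..1} (\<lambda>x. g x * Y x)" by (intro continuous_intros gc Yc)
  have Ia: "integral {u..1} (\<lambda>x. g x * Y x) = 1 - Y 1"
  proof -
    have "integral {u..1} (\<lambda>x. g x * Y x) = (- Y 1) - (- Y u)"
      by (rule ftc_real) (use u1 in \<open>auto intro!: derivative_eq_intros Yder\<close>)
    then show ?thesis using Yu by simp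
  qed
  have Ib: "integral {u..1} (\<lambda>x. (x - u) * (g x * Y x)) = integral {u..1} Y - (1 - u) * Y 1"
  proof -
    have "integral {u..1} (\<lambda>x. - Y x + (x - u) * (g x * Y x)) = (- ((1 - u) * Y 1)) - (- ((u - u) * Y u))"
    proof (rule ftc_real)
      show "u \<le> 1" using u1 by simp
      fix x assume x: "x \<in> {u..1}"
      have "((\<lambda>x. - ((x - u) * Y x)) has_real_derivative - ((1 - 0) * Y x + (x - u) * (- (g x * Y x)))) (at x within {u..1})"
        by (auto intro!: derivative_eq_intros Yder[OF x])
      then show "((\<lambda>x. - ((x - u) * Y x)) has_real_derivative - Y x + (x - u) * (g x * Y x)) (at x within {u..1})"
        by (simp add: algebra_simps)
    qed
    moreover have "integral {u..1} (\<lambda>x. - Y x + (x - u) * (g x * Y x)) = - integral {u..1} Y + integral {u..1} (\<lambda>x. (x - u) * (g x * Y x))"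
      by (subst integral_add) (auto intro!: ic continuous_intros Yc gc)
    ultimately show ?thesis by simp
  qed
  have Ic: "integral {u..1} (\<lambda>x. Uy u (Y x) * (g x * Y x)) = U u 1 - U u (Y 1)"
  proof -
    have "integral {u..1} (\<lambda>x. Uy u (Y x) * (g x * Y x)) = (- U u (Y 1)) - (- U u (Y u))"
    proof (rule ftc_real)
      show "u \<le> 1" using u1 by simp
      fix x assume x: "x \<in> {u..1}"
      have "((\<lambda>x. U u (Y x)) has_real_derivative Uy u (Y x) * (- (g x * Y x))) (at x within {u..1})"
        by (rule DERIV_chain2[OF Ud Yder[OF x]]) (use u0 u1 Y01[OF x] in auto)
      then show "((\<lambda>x. - U u (Y x)) has_real_derivative Uy u (Y x) * (g x * Y x)) (at x within {u..1})"
        using DERIV_minus by fastforce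
    qed
    then show ?thesis using Yu by simp
  qed
  define W where "W x = (x * Q x (Y x) - u * Q u (Y x)) * (g x * Y x)" for x
  have Qx: "continuous_on {u..1} (\<lambda>x. Q x (Y x))" unfolding Q_def
    by (intro continuous_intros Uyx Vc') (use Vnz in auto)
  have Qu: "continuous_on {u..1} (\<lambda>x. Q u (Y x))" unfolding Q_def
    by (intro continuous_intros Uyu) (use Vnz[of u] u1 in auto)
  have Wc: "continuous_on {u..1} W" unfolding W_def by (intro continuous_intros Qx Qu gYc)
  have Aeq: "Uy x (Y x) * Y x * (V u / (u * den)) / (x ^ \<mu> - \<epsilon>)
        = g u * (W x + (u / V u) * (Uy u (Y x) * (g x * Y x)))" if x: "x \<in> {u..1}" for x
  proof -
    have x0: "x > 0" using x u0 by auto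
    have dx: "x ^ \<mu> - \<epsilon> > 0" using dpos[of x] x by auto
    have Vx: "V x > 0" using Vpos[OF x] .
    have Vu: "V u > 0" using Vpos[of u] u1 by auto
    have "W x + (u / V u) * (Uy u (Y x) * (g x * Y x)) = x * Q x (Y x) * (g x * Y x)"
      unfolding W_def Q_def using Vu by (simp add: field_simps)
    also have "\<dots> = Uy x (Y x) * Y x / (x ^ \<mu> - \<epsilon>)"
      unfolding Q_def g_def using x0 dx Vx by (simp add: field_simps)
    finally have e: "W x + (u / V u) * (Uy u (Y x) * (g x * Y x)) = Uy x (Y x) * Y x / (x ^ \<mu> - \<epsilon>)" .
    show ?thesis unfolding e unfolding g_def den_def using u0 den0 dx by (simp add: den_def field_simps)
  qed
  have Dsplit: "integral {u..1} (\<lambda>x. Uy x (Y x) * Y x * (V u / (u * den)) / (x ^ \<mu> - \<epsilon>))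
       = g u * integral {u..1} W + g u * (u / V u) * (U u 1 - U u (Y 1))"
  proof -
    have "integral {u..1} (\<lambda>x. Uy x (Y x) * Y x * (V u / (u * den)) / (x ^ \<mu> - \<epsilon>))
        = integral {u..1} (\<lambda>x. g u * (W x + (u / V u) * (Uy u (Y x) * (g x * Y x))))"
      by (rule integral_cong) (rule Aeq)
    also have "\<dots> = g u * (integral {u..1} W + (u / V u) * integral {u..1} (\<lambda>x. Uy u (Y x) * (g x * Y x)))"
      using Vnz[of u] u1 by (subst integral_mult_right, subst integral_add, auto intro!: ic continuous_intros Wc Uyu gYc)
    finally show ?thesis unfolding Ic by (simp add: algebra_simps)
  qed
  have gu: "g u * (u / V u) = 1 / den"
    using Vpos[of u] u0 u1 den0 by (simp add: g_def den_def field_simps)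
  have gu_le: "g u \<le> V1 / (u * den)"
    unfolding g_def den_def[symmetric] using Vhi[of u] u0 u1 den0 by (intro divide_right_mono) auto
  have Wb: "\<bar>W x\<bar> \<le> (u * \<eta> + B2 * (x - u)) * (g x * Y x)" if x: "x \<in> {u..1}" for x
  proof -
    have x01: "x \<in> {0..1}" "u \<in> {0..1}" "Y x \<in> {0..1}" using x u0 u1 Y01[OF x] by auto
    have QxB: "\<bar>Q x (Y x)\<bar> \<le> B" "\<bar>Q u (Y x)\<bar> \<le> B" using QB x01 by (auto simp: Q_def)
    have dQ: "\<bar>Q x (Y x) - Q u (Y x)\<bar> \<le> \<eta> + 2 * B * (x - u) / \<delta>1"
    proof (cases "x - u < \<delta>1")
      case True
      then have "\<bar>Q x (Y x) - Q u (Y x)\<bar> \<le> \<eta>" using Qc[OF x01(1) x01(2) x01(3)] x by (auto simp: Q_def)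
      moreover have "0 \<le> 2 * B * (x - u) / \<delta>1" using B0 d1 x by auto
      ultimately show ?thesis by linarith
    next
      case False
      have "\<bar>Q x (Y x) - Q u (Y x)\<bar> \<le> 2 * B" using QxB by linarith
      also have "\<dots> \<le> 2 * B * (x - u) / \<delta>1"
        using False B0 d1 by (simp add: le_divide_eq mult_left_mono)
      finally have "\<bar>Q x (Y x) - Q u (Y x)\<bar> \<le> 2 * B * (x - u) / \<delta>1" .
      moreover have "0 \<le> \<eta>"
        using Qc[OF x01(2) x01(2) x01(3)] d1 by simp
      ultimately show ?thesis by linarith
    qed
    have "\<bar>x * Q x (Y x) - u * Q u (Y x)\<bar> = \<bar>(x - u) * Q x (Y x) + u * (Q x (Y x) - Q u (Y x))\<bar>"
      by (simp add: algebra_simps)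
    also have "\<dots> \<le> (x - u) * B + u * (\<eta> + 2 * B * (x - u) / \<delta>1)"
    proof -
      have "\<bar>(x - u) * Q x (Y x)\<bar> \<le> (x - u) * B" using QxB x by (simp add: abs_mult mult_left_mono)
      moreover have "\<bar>u * (Q x (Y x) - Q u (Y x))\<bar> \<le> u * (\<eta> + 2 * B * (x - u) / \<delta>1)"
        using dQ u0 by (simp add: abs_mult mult_left_mono)
      ultimately show ?thesis by (smt (verit) abs_triangle_ineq)
    qed
    also have "\<dots> \<le> u * \<eta> + B2 * (x - u)"
    proof -
      have "u * (2 * B * (x - u) / \<delta>1) \<le> 2 * B * (x - u) / \<delta>1"
        using u1 u0 B0 d1 x by (intro mult_left_le_one_le) auto
      then show ?thesis unfolding B2_def by (simp add: algebra_simps add_divide_distrib)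
    qed
    finally have A: "\<bar>x * Q x (Y x) - u * Q u (Y x)\<bar> \<le> u * \<eta> + B2 * (x - u)" .
    have gY0: "0 \<le> g x * Y x" using gpos[OF x] Y01[OF x] by simp
    have "\<bar>W x\<bar> = \<bar>x * Q x (Y x) - u * Q u (Y x)\<bar> * (g x * Y x)"
      unfolding W_def abs_mult[of _ "g x * Y x"] abs_of_nonneg[OF gY0] ..
    then show ?thesis using mult_right_mono[OF A gY0] by simp
  qed
  have eta0: "0 \<le> \<eta>" using Qc[of 0 0 0] d1 by simp
  have IW: "\<bar>integral {u..1} W\<bar> \<le> u * (\<eta> + B2 * (1 / (real k - 1) + u / r ^ k))"
  proof -
    have "\<bar>integral {u..1} W\<bar> \<le> integral {u..1} (\<lambda>x. (u * \<eta> + B2 * (x - u)) * (g x * Y x))"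
    proof -
      have i1: "W integrable_on {u..1}" by (rule ic[OF Wc])
      have i2: "(\<lambda>x. (u * \<eta> + B2 * (x - u)) * (g x * Y x)) integrable_on {u..1}"
        by (intro ic continuous_intros gYc)
      show ?thesis using integral_norm_bound_integral[OF i1 i2] Wb by auto
    qed
    also have "\<dots> = u * \<eta> * integral {u..1} (\<lambda>x. g x * Y x) + B2 * integral {u..1} (\<lambda>x. (x - u) * (g x * Y x))"
    proof -
      have "integral {u..1} (\<lambda>x. (u * \<eta> + B2 * (x - u)) * (g x * Y x)) =
            integral {u..1} (\<lambda>x. u * \<eta> * (g x * Y x) + B2 * ((x - u) * (g x * Y x)))"
        by (simp add: algebra_simps)
      also have "\<dots> = u * \<eta> * integral {u..1} (\<lambda>x. g x * Y x) + B2 * integral {u..1} (\<lambda>x. (x - u) * (g x * Y x))"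
        by (subst integral_add, auto intro!: ic continuous_intros gYc)
      finally show ?thesis .
    qed
    also have "\<dots> = u * \<eta> * (1 - Y 1) + B2 * (integral {u..1} Y - (1 - u) * Y 1)" unfolding Ia Ib ..
    also have "\<dots> \<le> u * \<eta> + B2 * integral {u..1} Y"
    proof -
      have B20: "0 \<le> B2" unfolding B2_def using B0 d1 by auto
      have "u * \<eta> * (1 - Y 1) \<le> u * \<eta>" using u0 eta0 Y01[of 1] u1 by (simp add: mult_left_le)
      moreover have "B2 * (integral {u..1} Y - (1 - u) * Y 1) \<le> B2 * integral {u..1} Y"
        using B20 u1 Y01[of 1] by (intro mult_left_mono) auto
      ultimately show ?thesis by linarith
    qed
    also have "\<dots> \<le> u * \<eta> + B2 * (u / (real k - 1) + u * (u / r ^ k))"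
      using IntY B0 d1 unfolding B2_def by (intro add_left_mono mult_left_mono) auto
    also have "\<dots> = u * (\<eta> + B2 * (1 / (real k - 1) + u / r ^ k))" by (simp add: algebra_simps)
    finally show ?thesis .
  qed
  have Ulow: "c0 \<le> U u (Y 1)"
  proof (rule c0)
    show "u \<in> {0..1}" using u0 u1 by auto
    show "Y 1 \<in> {0..1}" using Y01[of 1] u1 by auto
    show "u + Y 1 < \<rho>U" using Y1b u\<rho> by linarith
  qed
  have LHS: "- U u 1 / den + integral {u..1} (\<lambda>x. Uy x (Y x) * Y x * (V u / (u * den)) / (x ^ \<mu> - \<epsilon>))
       = - U u (Y 1) / den + g u * integral {u..1} W"
  proof -
    have e: "g u * (u / V u) * (U u 1 - U u (Y 1)) = U u 1 / den - U u (Y 1) / den"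
      using gu by (simp add: diff_divide_distrib)
    show ?thesis unfolding Dsplit e by linarith
  qed
  have "- U u (Y 1) / den + g u * integral {u..1} W \<le> - c0 / den + (V1 / (u * den)) * (u * (\<eta> + B2 * (1 / (real k - 1) + u / r ^ k)))"
  proof -
    have "- U u (Y 1) / den \<le> - c0 / den" using Ulow den0 by (simp add: divide_right_mono)
    moreover have "g u * integral {u..1} W \<le> (V1 / (u * den)) * (u * (\<eta> + B2 * (1 / (real k - 1) + u / r ^ k)))"
    proof -
      have "g u * integral {u..1} W \<le> g u * \<bar>integral {u..1} W\<bar>"
        using gpos[of u] u1 by (intro mult_left_mono) auto
      also have "\<dots> \<le> (V1 / (u * den)) * (u * (\<eta> + B2 * (1 / (real k - 1) + u / r ^ k)))"
        using gu_le IW gpos[of u] u1 by (intro mult_mono) auto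
      finally show ?thesis .
    qed
    ultimately show ?thesis by linarith
  qed
  also have "\<dots> = (- c0 + V1 * (\<eta> + B2 * (1 / (real k - 1) + u / r ^ k))) / den"
    using u0 den0 by (simp add: field_simps)
  finally show ?thesis
    using LHS unfolding den_def Y_def Gu_def g_def B2_def by simp
qed



definition pd :: "('e::euclidean_space \<Rightarrow> real) \<Rightarrow> 'e \<Rightarrow> 'e \<Rightarrow> real" where
  "pd f b v = deriv (\<lambda>t. f (v + t *\<^sub>R b)) 0"

lemma analytic_pd:
  fixes f :: "'e::euclidean_space \<Rightarrow> real"
  assumes an: "real_analytic_on f S" and b: "b \<in> Basis" and p: "p \<in> S"
  shows "isCont f p" "isCont (pd f b) p" "((\<lambda>t. f (p + t *\<^sub>R b)) has_real_derivative pd f b p) (at 0)"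
proof -
  obtain \<rho> D where \<rho>: "\<rho> > 0" and cD: "isCont D p"
    and dD: "\<And>v. v \<in> ball p \<rho> \<Longrightarrow> ((\<lambda>t. f (v + t *\<^sub>R b)) has_real_derivative D v) (at 0)"
    using analytic_partial_at[OF an p b] by blast
  show "isCont f p" using analytic_partial_at[OF an p b] by blast
  have eq: "pd f b v = D v" if "v \<in> ball p \<rho>" for v
    unfolding pd_def using dD[OF that] by (rule DERIV_imp_deriv)
  have "eventually (\<lambda>v. pd f b v = D v) (nhds p)"
    using eventually_nhds_in_open[of "ball p \<rho>" p] \<rho> by (auto elim!: eventually_mono intro: eq)
  then show "isCont (pd f b) p" using cD isCont_cong by blast
  show "((\<lambda>t. f (p + t *\<^sub>R b)) has_real_derivative pd f b p) (at 0)"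
    using dD[of p] eq[of p] \<rho> by simp
qed



theorem theoremA:
  fixes \<mu> :: nat
    and A :: "(real ^ 'n) set"
    and U :: "real ^ 'n \<Rightarrow> real \<Rightarrow> real \<Rightarrow> real"
    and V :: "real ^ 'n \<Rightarrow> real \<Rightarrow> real"
  assumes mu: "\<mu> \<ge> 1"
    and A_open: "open A"
    and U_an: "real_analytic_on (\<lambda>((x, y), a). U a x y) (({-1..1} \<times> {-1..1}) \<times> A)"
    and U_pos: "\<forall>a\<in>A. U a 0 0 > 0"
    and U_taylor: "\<forall>a\<in>A. \<exists>c :: nat \<Rightarrow> nat \<Rightarrow> real.
        (\<exists>r>0. \<forall>x y. \<bar>x\<bar> < r \<and> \<bar>y\<bar> < r \<longrightarrow>
            ((\<lambda>(i, j). c i j * x ^ i * y ^ j) has_sum U a x y) UNIV)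
        \<and> (\<forall>x\<in>{-1..1}. \<forall>y\<in>{-1..1}. (\<lambda>(i, j). \<bar>c i j * x ^ i * y ^ j\<bar>) summable_on UNIV)"
    and V_an: "real_analytic_on (\<lambda>(x, a). V a x) ({-1..1} \<times> A)"
    and V_pos: "\<forall>a\<in>A. \<forall>x\<in>{-1..1}. V a x > 0"
  shows "\<forall>K. compact K \<and> K \<subseteq> A \<longrightarrow>
           (\<forall>M::real. \<exists>\<delta>>0. \<forall>s \<epsilon> a. 0 < s \<and> s < \<delta> \<and> \<bar>\<epsilon>\<bar> < \<delta> \<and> a \<in> K \<longrightarrow>
              (\<exists>D. ((\<lambda>\<sigma>. dulac_time \<mu> (U a) (V a) \<epsilon> \<sigma>) has_real_derivative D) (at s) \<and> D < M))"
proof (intro allI impI)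
  fix K :: "(real ^ 'n) set" and M :: real
  assume K: "compact K \<and> K \<subseteq> A"
  define F where "F = (\<lambda>((x, y), a). U a x y :: real)"
  define S where "S = ({-1..1::real} \<times> {-1..1::real}) \<times> A"
  define bY :: "(real \<times> real) \<times> (real ^ 'n)" where "bY = ((0, 1), 0)"
  have bY: "bY \<in> Basis" by (simp add: bY_def Basis_prod_def)
  define Uy where "Uy a x y = pd F bY ((x, y), a)" for a x y
  have FS: "real_analytic_on F S" using U_an by (simp add: F_def S_def)
  have Ud: "(U a x has_real_derivative Uy a x y) (at y)"
    if "a \<in> A" "x \<in> {-1..1}" "y \<in> {-1..1}" for a x y
  proof -
    have "((\<lambda>t. F (((x, y), a) + t *\<^sub>R bY)) has_real_derivative Uy a x y) (at 0)"
      unfolding Uy_def by (rule analytic_pd(3)[OF FS bY]) (use that in \<open>auto simp: S_def\<close>)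
    then have "((\<lambda>t. U a x (t + y)) has_real_derivative Uy a x y) (at 0)"
      by (simp add: F_def bY_def add.commute)
    then show ?thesis using DERIV_shift[of "U a x" "Uy a x y" 0 y] by simp
  qed
  have Fc: "continuous_on S F"
    by (intro continuous_at_imp_continuous_on ballI analytic_pd(1)[OF FS bY])
  have Uyc_all: "continuous_on S (\<lambda>p. Uy (snd p) (fst (fst p)) (snd (fst p)))"
  proof -
    have "continuous_on S (pd F bY)"
      by (intro continuous_at_imp_continuous_on ballI analytic_pd(2)[OF FS bY])
    then show ?thesis by (simp add: Uy_def)
  qed
  define G where "G = (\<lambda>(x, a). V a x :: real)"
  obtain bX :: "real \<times> (real ^ 'n)" where bX: "bX \<in> Basis" using nonempty_Basis by blast
  have Gc: "continuous_on ({-1..1} \<times> A) G"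
    by (intro continuous_at_imp_continuous_on ballI analytic_pd(1)[OF V_an[folded G_def] bX])
  have Uc_a: "continuous_on ({-1..1} \<times> {-1..1}) (\<lambda>(x,y). U a x y)" if a: "a \<in> A" for a
  proof -
    have "continuous_on ({-1..1} \<times> {-1..1}) (\<lambda>p. F (p, a))"
      by (rule continuous_on_compose2[OF Fc]) (use a in \<open>auto intro!: continuous_intros simp: S_def\<close>)
    then show ?thesis by (simp add: F_def case_prod_beta)
  qed
  have Uyc_a: "continuous_on ({-1..1} \<times> {-1..1}) (\<lambda>(x,y). Uy a x y)" if a: "a \<in> A" for a
  proof -
    have "continuous_on ({-1..1} \<times> {-1..1}) (\<lambda>p. Uy (snd (p, a)) (fst (fst (p, a))) (snd (fst (p, a))))"
      by (rule continuous_on_compose2[OF Uyc_all]) (use a in \<open>auto intro!: continuous_intros simp: S_def\<close>)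
    then show ?thesis by (simp add: case_prod_beta)
  qed
  have Vc_a: "continuous_on {-1..1} (V a)" if a: "a \<in> A" for a
  proof -
    have "continuous_on {-1..1} (\<lambda>x. G (x, a))"
      by (rule continuous_on_compose2[OF Gc]) (use a in \<open>auto intro!: continuous_intros\<close>)
    then show ?thesis by (simp add: G_def)
  qed
  show "\<exists>\<delta>>0. \<forall>s \<epsilon> a. 0 < s \<and> s < \<delta> \<and> \<bar>\<epsilon>\<bar> < \<delta> \<and> a \<in> K \<longrightarrow>
              (\<exists>D. ((\<lambda>\<sigma>. dulac_time \<mu> (U a) (V a) \<epsilon> \<sigma>) has_real_derivative D) (at s) \<and> D < M)"
  proof (cases "K = {}")
    case True then show ?thesis by (intro exI[of _ 1]) auto
  next
    case Kne: False
    have cK: "compact K" and KA: "K \<subseteq> A" using K by auto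
    define C2 where "C2 = {0..1::real} \<times> K"
    have C2c: "compact C2" unfolding C2_def using cK by (intro compact_Times) auto
    have C2ne: "C2 \<noteq> {}" unfolding C2_def using Kne by auto
    have C2sub: "C2 \<subseteq> {-1..1} \<times> A" unfolding C2_def using KA by auto
    have GC2: "continuous_on C2 G" using Gc C2sub by (rule continuous_on_subset)
    obtain pmin where pmin: "pmin \<in> C2" "\<And>q. q \<in> C2 \<Longrightarrow> G pmin \<le> G q"
      using continuous_attains_inf[OF C2c C2ne GC2] by blast
    obtain pmax where pmax: "pmax \<in> C2" "\<And>q. q \<in> C2 \<Longrightarrow> G q \<le> G pmax"
      using continuous_attains_sup[OF C2c C2ne GC2] by blast
    define v0 where "v0 = G pmin"
    define V1 where "V1 = G pmax"
    have v0: "v0 > 0" using pmin(1) C2sub V_pos unfolding v0_def G_def by (auto simp: case_prod_beta)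
    have Vlo: "v0 \<le> V a x" if "a \<in> K" "x \<in> {0..1}" for a x
      using pmin(2)[of "(x, a)"] that unfolding v0_def C2_def G_def by auto
    have Vhi: "V a x \<le> V1" if "a \<in> K" "x \<in> {0..1}" for a x
      using pmax(2)[of "(x, a)"] that unfolding V1_def C2_def G_def by auto
    obtain a1 where a1: "a1 \<in> K" using Kne by blast
    have V1pos: "V1 > 0" using Vlo[OF a1, of 0] Vhi[OF a1, of 0] v0 by auto
    define C1 where "C1 = ({0..1::real} \<times> {0..1::real}) \<times> K"
    have C1c: "compact C1" unfolding C1_def using cK by (intro compact_Times) auto
    have C1sub: "C1 \<subseteq> S" unfolding C1_def S_def using KA by auto
    define Qf where "Qf p = Uy (snd p) (fst (fst p)) (snd (fst p)) / G (fst (fst p), snd p)" for p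
    have Qfc: "continuous_on C1 Qf"
    proof -
      have c1: "continuous_on C1 (\<lambda>p. Uy (snd p) (fst (fst p)) (snd (fst p)))"
        using Uyc_all C1sub by (rule continuous_on_subset)
      have c2: "continuous_on C1 (\<lambda>p. G (fst (fst p), snd p))"
        by (rule continuous_on_compose2[OF Gc]) (use KA in \<open>auto intro!: continuous_intros simp: C1_def\<close>)
      have nz: "G (fst (fst p), snd p) \<noteq> 0" if "p \<in> C1" for p
        using Vlo[of "snd p" "fst (fst p)"] v0 that by (auto simp: C1_def G_def)
      show ?thesis unfolding Qf_def by (intro continuous_intros c1 c2) (use nz in auto)
    qed
    have "bounded (Qf ` C1)" by (intro compact_imp_bounded compact_continuous_image Qfc C1c)
    then obtain B' where B': "\<And>p. p \<in> C1 \<Longrightarrow> norm (Qf p) \<le> B'" unfolding bounded_iff by blast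
    define B where "B = max B' 0"
    have B0: "0 \<le> B" by (simp add: B_def)
    have QB: "\<bar>Uy a x y / V a x\<bar> \<le> B" if "a \<in> K" "x \<in> {0..1}" "y \<in> {0..1}" for a x y
      using B'[of "((x, y), a)"] that by (auto simp: C1_def Qf_def G_def B_def)
    have FK: "continuous_on K (\<lambda>a. F ((0, 0), a))"
      by (rule continuous_on_compose2[OF Fc]) (use KA in \<open>auto intro!: continuous_intros simp: S_def\<close>)
    obtain a0 where a0: "a0 \<in> K" "\<And>a. a \<in> K \<Longrightarrow> F ((0, 0), a0) \<le> F ((0, 0), a)"
      using continuous_attains_inf[OF cK Kne FK] by blast
    define c0 where "c0 = U a0 0 0 / 2"
    have c0: "c0 > 0" using U_pos a0(1) KA by (auto simp: c0_def)
    have U00: "2 * c0 \<le> U a 0 0" if "a \<in> K" for a using a0(2)[OF that] by (simp add: c0_def F_def)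
    have ucF: "uniformly_continuous_on C1 F" using Fc C1sub C1c
      by (intro compact_uniformly_continuous) (auto elim: continuous_on_subset)
    obtain \<rho>U where \<rho>U: "\<rho>U > 0" and \<rho>Uh: "\<And>p p'. p \<in> C1 \<Longrightarrow> p' \<in> C1 \<Longrightarrow> dist p' p < \<rho>U \<Longrightarrow> dist (F p') (F p) < c0"
      using ucF c0 unfolding uniformly_continuous_on_def by metis
    have Ulow: "c0 \<le> U a x y" if a: "a \<in> K" and xy: "x \<in> {0..1}" "y \<in> {0..1}" "x + y < \<rho>U" for a x y
    proof -
      have "dist ((x, y), a) ((0, 0), a) \<le> x + y"
        using xy by (simp add: dist_Pair_Pair dist_real_def sqrt_sum_squares_le_sum)
      then have "dist ((x, y), a) ((0, 0), a) < \<rho>U" using xy by linarith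
      then have "dist (F ((x, y), a)) (F ((0, 0), a)) < c0"
        using \<rho>Uh[of "((0, 0), a)" "((x, y), a)"] a xy by (auto simp: C1_def)
      then show ?thesis using U00[OF a] by (simp add: F_def dist_real_def)
    qed
    define \<eta> where "\<eta> = c0 / (6 * V1)"
    have \<eta>: "\<eta> > 0" using c0 V1pos by (simp add: \<eta>_def)
    have ucQ: "uniformly_continuous_on C1 Qf" using Qfc C1c by (rule compact_uniformly_continuous)
    obtain \<delta>1 where \<delta>1: "\<delta>1 > 0" and \<delta>1h: "\<And>p p'. p \<in> C1 \<Longrightarrow> p' \<in> C1 \<Longrightarrow> dist p' p < \<delta>1 \<Longrightarrow> dist (Qf p') (Qf p) < \<eta>"
      using ucQ \<eta> unfolding uniformly_continuous_on_def by metis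
    have Qc: "\<bar>Uy a x y / V a x - Uy a x' y / V a x'\<bar> \<le> \<eta>"
      if a: "a \<in> K" and xx: "x \<in> {0..1}" "x' \<in> {0..1}" "y \<in> {0..1}" "\<bar>x - x'\<bar> < \<delta>1" for a x x' y
    proof -
      have "dist ((x, y), a) ((x', y), a) < \<delta>1" using xx by (simp add: dist_Pair_Pair dist_real_def)
      then have "dist (Qf ((x, y), a)) (Qf ((x', y), a)) < \<eta>"
        using \<delta>1h[of "((x', y), a)" "((x, y), a)"] a xx by (auto simp: C1_def)
      then show ?thesis by (simp add: Qf_def G_def dist_real_def)
    qed
    define B2 where "B2 = B + 2 * B / \<delta>1"
    have B20: "B2 \<ge> 0" using B0 \<delta>1 by (simp add: B2_def)
    define k where "k = nat \<lceil>6 * V1 * B2 / c0\<rceil> + 2"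
    have k2: "k \<ge> 2" by (simp add: k_def)
    have kk: "6 * V1 * B2 / c0 + 1 \<le> real k - 1"
    proof -
      have "6 * V1 * B2 / c0 \<le> real (nat \<lceil>6 * V1 * B2 / c0\<rceil>)" by linarith
      then show ?thesis by (simp add: k_def)
    qed
    have kB: "V1 * (B2 * (1 / (real k - 1))) \<le> c0 / 6"
    proof -
      have k1: "real k - 1 > 0" using k2 by simp
      have "6 * V1 * B2 \<le> c0 * (real k - 1)"
      proof -
        have "6 * V1 * B2 / c0 \<le> real k - 1" using kk by linarith
        then show ?thesis using c0 by (simp add: divide_le_eq mult.commute)
      qed
      then show ?thesis using k1 c0 by (simp add: field_simps)
    qed
    define r where "r = min 1 (v0 / (2 * real k))"
    have r: "0 < r" "r \<le> 1" using v0 k2 by (auto simp: r_def)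
    have r\<mu>: "r ^ \<mu> \<le> v0 / (2 * real k)"
    proof -
      have "r ^ \<mu> \<le> r ^ 1" using r mu by (intro power_decreasing) auto
      then show ?thesis by (simp add: r_def)
    qed
    define eb where "eb = min (v0 / (2 * real k)) (c0 / (4 * (\<bar>M\<bar> + 1)))"
    have eb: "eb > 0" using v0 k2 c0 by (simp add: eb_def)
    define ub where "ub = min (r / 2) (min (\<rho>U * r ^ k / 4) (min (c0 * r ^ k / (6 * (V1 * B2 + 1))) (c0 / (4 * (\<bar>M\<bar> + 1)))))"
    have p1: "0 < c0 * r ^ k / (6 * (V1 * B2 + 1))"
      using c0 r V1pos B20 by (intro divide_pos_pos mult_pos_pos) (auto simp: add_nonneg_pos)
    have p2: "0 < \<rho>U * r ^ k / 4" using \<rho>U r by simp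
    have ub: "ub > 0" using r p1 p2 c0 unfolding ub_def by (simp add: add_pos_nonneg)
    define \<delta> where "\<delta> = min (min (ub / 2) eb) ((ub / 2) ^ \<mu>)"
    have \<delta>: "\<delta> > 0" using ub eb by (simp add: \<delta>_def)
    show ?thesis
    proof (rule exI[of _ \<delta>], intro conjI allI impI \<delta>)
      fix s \<epsilon> a assume H: "0 < s \<and> s < \<delta> \<and> \<bar>\<epsilon>\<bar> < \<delta> \<and> a \<in> K"
      then have s: "0 < s" "s < ub / 2" and e: "\<bar>\<epsilon>\<bar> < eb" "\<bar>\<epsilon>\<bar> < (ub / 2) ^ \<mu>" and a: "a \<in> K"
        by (auto simp: \<delta>_def)
      have aA: "a \<in> A" using a KA by auto
      define u where "u = s + theta \<mu> \<epsilon>"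
      have th: "theta \<mu> \<epsilon> < ub / 2"
      proof -
        have "theta \<mu> \<epsilon> \<le> root \<mu> \<bar>\<epsilon>\<bar>" by (rule theta_le_root_abs[OF mu])
        also have "\<dots> < root \<mu> ((ub / 2) ^ \<mu>)" using e mu by (intro real_root_less_mono) auto
        also have "\<dots> = ub / 2" using ub mu by (intro real_root_pos2) auto
        finally show ?thesis .
      qed
      have uub: "u < ub" using s th by (simp add: u_def)
      have ubs: "ub \<le> r / 2" "ub \<le> \<rho>U * r ^ k / 4" "ub \<le> c0 * r ^ k / (6 * (V1 * B2 + 1))"
          "ub \<le> c0 / (4 * (\<bar>M\<bar> + 1))"
        unfolding ub_def
        by (rule min.cobounded1, rule order_trans[OF min.cobounded2 min.cobounded1],
            rule order_trans[OF min.cobounded2 order_trans[OF min.cobounded2 min.cobounded1]],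
            rule order_trans[OF min.cobounded2 order_trans[OF min.cobounded2 min.cobounded2]])
      have u0: "0 < u" using s theta_nonneg[of \<mu> \<epsilon>] by (simp add: u_def)
      have ur: "u < r" using uub ubs r by linarith
      have u1: "u < 1" using ur r by simp
      have rk: "r ^ \<mu> + \<bar>\<epsilon>\<bar> \<le> v0 / real k"
      proof -
        have "eb \<le> v0 / (2 * real k)" unfolding eb_def by (rule min.cobounded1)
        then have "\<bar>\<epsilon>\<bar> \<le> v0 / (2 * real k)" using e by linarith
        then show ?thesis using r\<mu> by (simp add: field_simps)
      qed
      have u\<rho>: "u + (u + u / r ^ k) < \<rho>U"
      proof -
        have "u \<le> \<rho>U * r ^ k / 4" using uub ubs by linarith
        then have a1: "u / r ^ k \<le> \<rho>U / 4" using r by (simp add: divide_le_eq mult.commute)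
        have "r ^ k \<le> 1" using r by (simp add: power_le_one)
        then have "\<rho>U * r ^ k / 4 \<le> \<rho>U / 4" using \<rho>U by (simp add: mult_left_le)
        then have "u \<le> \<rho>U / 4" using \<open>u \<le> \<rho>U * r ^ k / 4\<close> by linarith
        then show ?thesis using a1 \<rho>U by linarith
      qed
      have Dd: "((\<lambda>\<sigma>. dulac_time \<mu> (U a) (V a) \<epsilon> \<sigma>) has_real_derivative
           (- U a u 1 / (u ^ \<mu> - \<epsilon>) + integral {u..1} (\<lambda>x. Uy a x (exp (- integral {u..x} (\<lambda>t. V a t / (t * (t ^ \<mu> - \<epsilon>))))) * exp (- integral {u..x} (\<lambda>t. V a t / (t * (t ^ \<mu> - \<epsilon>)))) * (V a u / (u * (u ^ \<mu> - \<epsilon>))) / (x ^ \<mu> - \<epsilon>)))) (at s)"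
        by (rule dulac_deriv[OF mu Uc_a[OF aA] Uyc_a[OF aA] Ud[OF aA] Vc_a[OF aA] _ s(1) u_def u1])
           (use V_pos aA in auto)
      have Db: "- U a u 1 / (u ^ \<mu> - \<epsilon>) + integral {u..1} (\<lambda>x. Uy a x (exp (- integral {u..x} (\<lambda>t. V a t / (t * (t ^ \<mu> - \<epsilon>))))) * exp (- integral {u..x} (\<lambda>t. V a t / (t * (t ^ \<mu> - \<epsilon>)))) * (V a u / (u * (u ^ \<mu> - \<epsilon>))) / (x ^ \<mu> - \<epsilon>))
          \<le> (- c0 + V1 * (\<eta> + (B + 2 * B / \<delta>1) * (1 / (real k - 1) + u / r ^ k))) / (u ^ \<mu> - \<epsilon>)"
        by (rule dulac_bound[OF mu Uc_a[OF aA] Uyc_a[OF aA] Ud[OF aA] Vc_a[OF aA] v0 Vlo[OF a] Vhi[OF a] B0 QB[OF a] \<delta>1 Qc[OF a] Ulow[OF a] k2 r rk s(1) u_def ur u\<rho>])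
      define den where "den = u ^ \<mu> - \<epsilon>"
      have den0: "den > 0" unfolding den_def u_def
        by (rule theta_pos_den[OF mu]) (use s in simp)
      have num: "- c0 + V1 * (\<eta> + (B + 2 * B / \<delta>1) * (1 / (real k - 1) + u / r ^ k)) \<le> - c0 / 2"
      proof -
        have e1: "V1 * \<eta> = c0 / 6" using V1pos by (simp add: \<eta>_def)
        have "u \<le> c0 * r ^ k / (6 * (V1 * B2 + 1))" using uub ubs by linarith
        moreover have pos6: "0 < 6 * (V1 * B2 + 1)" using V1pos B20 by (simp add: add_nonneg_pos)
        ultimately have "u * (6 * (V1 * B2 + 1)) \<le> c0 * r ^ k" by (simp add: pos_le_divide_eq)
        then have "6 * (V1 * B2) * u \<le> c0 * r ^ k" using u0 by (simp add: algebra_simps)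
        then have e3: "V1 * (B2 * (u / r ^ k)) \<le> c0 / 6" using r by (simp add: field_simps)
        have "V1 * (\<eta> + B2 * (1 / (real k - 1) + u / r ^ k)) = V1 * \<eta> + V1 * (B2 * (1 / (real k - 1))) + V1 * (B2 * (u / r ^ k))"
          by (simp add: algebra_simps)
        then show ?thesis using e1 kB e3 unfolding B2_def by linarith
      qed
      have denb: "den \<le> c0 / (2 * (\<bar>M\<bar> + 1))"
      proof -
        have "u ^ \<mu> \<le> u ^ 1" using u0 u1 mu by (intro power_decreasing) auto
        moreover have "u \<le> c0 / (4 * (\<bar>M\<bar> + 1))" using uub ubs by linarith
        moreover have "\<bar>\<epsilon>\<bar> \<le> c0 / (4 * (\<bar>M\<bar> + 1))"
        proof -
          have "eb \<le> c0 / (4 * (\<bar>M\<bar> + 1))" unfolding eb_def by (rule min.cobounded2)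
          then show ?thesis using e by linarith
        qed
        ultimately have dl: "den \<le> c0 / (4 * (\<bar>M\<bar> + 1)) + c0 / (4 * (\<bar>M\<bar> + 1))" unfolding den_def by simp
        have "z / (4 * w) + z / (4 * w) = z / (2 * w)" for z w :: real
          by (cases "w = 0") (simp_all add: field_simps)
        then have eq: "c0 / (4 * (\<bar>M\<bar> + 1)) + c0 / (4 * (\<bar>M\<bar> + 1)) = c0 / (2 * (\<bar>M\<bar> + 1))" .
        show ?thesis using dl unfolding eq .
      qed
      have fin: "(- c0 + V1 * (\<eta> + (B + 2 * B / \<delta>1) * (1 / (real k - 1) + u / r ^ k))) / den < M"
      proof -
        have "(- c0 + V1 * (\<eta> + (B + 2 * B / \<delta>1) * (1 / (real k - 1) + u / r ^ k))) / den \<le> (- c0 / 2) / den"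
          using num den0 by (intro divide_right_mono) auto
        also have "(- c0 / 2) / den \<le> (- c0 / 2) / (c0 / (2 * (\<bar>M\<bar> + 1)))"
          using denb den0 c0 by (intro divide_left_mono_neg) (auto intro: mult_pos_pos)
        also have "\<dots> = - (\<bar>M\<bar> + 1)" using c0 by (simp add: field_simps)
        also have "\<dots> < M" by linarith
        finally show ?thesis .
      qed
      show "\<exists>D. ((\<lambda>\<sigma>. dulac_time \<mu> (U a) (V a) \<epsilon> \<sigma>) has_real_derivative D) (at s) \<and> D < M"
      proof -
        have "\<exists>D. ((\<lambda>\<sigma>. dulac_time \<mu> (U a) (V a) \<epsilon> \<sigma>) has_real_derivative D) (at s) \<and>
               D \<le> (- c0 + V1 * (\<eta> + (B + 2 * B / \<delta>1) * (1 / (real k - 1) + u / r ^ k))) / den"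
          using Dd Db unfolding den_def by blast
        then obtain D where D1: "((\<lambda>\<sigma>. dulac_time \<mu> (U a) (V a) \<epsilon> \<sigma>) has_real_derivative D) (at s)"
          and D2: "D \<le> (- c0 + V1 * (\<eta> + (B + 2 * B / \<delta>1) * (1 / (real k - 1) + u / r ^ k))) / den" by blast
        have "D < M" using D2 fin by linarith
        then show ?thesis using D1 by blast
      qed
    qed
  qed
qed


end
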